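(* Let $d\ge 1$ and $M>1$. For the online hitting set problem in which the point set is $\mathbb{Z}^d$ and the objects are (Euclidean) balls in $\mathbb{R}^d$ with radii in the range $[1,M]$, the deterministic online algorithm $\mathrm{ANC}$ described below achieves a competitive ratio of at most $\lfloor 2\sqrt{d}+2\rfloor^d\left(\lfloor\log_2 M\rfloor+1\right)$.
   Context: Online hitting set problem: the point set is known in advance; objects arrive one by one; upon each arrival the algorithm must ensure its current solution (points can only be added, never removed) contains a point of every object presented so far. The competitive ratio is the supremum over input sequences of the size of the algorithm's solution divided by the minimum size of an offline hitting set of the sequence. For an object (compact set with non-empty interior) $\sigma$ with boundary $\partial\sigma$, using $L_\infty$ distances $d_\infty$: $\alpha(x)=\min_{y\in\partial\sigma}d_\infty(x,y)/\max_{y\in\partial\sigma}d_\infty(x,y)$ for $x\in\sigma$; a center of $\sigma$ is a point $c\in\sigma$ maximizing $\alpha(x)$ (for a ball, its geometric center); the width of $\sigma$ is $\min_{y\in\partial\sigma}d_\infty(c,y)$. Algorithm $\mathrm{ANC}$: when an object $\sigma$ with center $c$ and width $w$ arrives, if it contains a point of the current solution do nothing. Otherwise let $i=\lfloor\log_2 w\rfloor$; for each $j\in[d]$ write uniquely $c(x_j)=z_j+f_j$ with $z_j\in 2^{i+1}\mathbb{Z}$ and $f_j\in[0,2^{i+1})$, set $r(x_j)=z_j$ if $f_j\in[0,2^i)$ and $r(x_j)=z_j+2^{i+1}$ if $f_j\in[2^i,2^{i+1})$, and add $r$ to the solution. *)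

theory Defs
  imports "HOL-Analysis.Analysis"
begin

text \<open>Points of R^d are modelled as real^'n with d = CARD('n).\<close>

definition linf_dist :: "real^'n \<Rightarrow> real^'n \<Rightarrow> real" where
  "linf_dist x y = Max (range (\<lambda>j. \<bar>x $ j - y $ j\<bar>))"

definition int_lattice :: "(real^'n) set" where
  "int_lattice = {x. \<forall>j. x $ j \<in> \<int>}"

definition width :: "(real^'n) set \<Rightarrow> real^'n \<Rightarrow> real" where
  "width \<sigma> c = Inf (linf_dist c ` frontier \<sigma>)"

definition anc_point :: "real^'n \<Rightarrow> real \<Rightarrow> real^'n" where
  "anc_point c w =
     (let i = \<lfloor>log 2 w\<rfloor>;
          s = (2::real) powr (of_int i + 1);
          h = (2::real) powr (of_int i)
      in \<chi> j. (let z = s * of_int \<lfloor>c $ j / s\<rfloor>; f = c $ j - z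
               in if f < h then z else z + s))"

definition anc_step :: "(real^'n) set \<Rightarrow> (real^'n) set \<times> (real^'n) \<Rightarrow> (real^'n) set" where
  "anc_step S oc =
     (let \<sigma> = fst oc; c = snd oc
      in if S \<inter> \<sigma> \<noteq> {} then S else insert (anc_point c (width \<sigma> c)) S)"

definition anc_run :: "((real^'n) set \<times> (real^'n)) list \<Rightarrow> (real^'n) set" where
  "anc_run objs = foldl anc_step {} objs"

end

theory Submission
  imports Defs
begin

lemma norm_sq_vec: "(norm (x::real^'n))^2 = (\<Sum>j\<in>UNIV. (x$j)^2)"
  by (simp add: norm_vec_def L2_set_def sum_nonneg)

lemma linf_ge: "\<bar>x$j - y$j\<bar> \<le> linf_dist x (y::real^'n)"
  unfolding linf_dist_def by (rule Max_ge) auto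

lemma linf_const:
  assumes "\<And>j. \<bar>x$j - y$j\<bar> = a"
  shows "linf_dist x (y::real^'n) = a"
proof -
  have "range (\<lambda>j. \<bar>x$j - y$j\<bar>) = {a}" using assms by auto
  then show ?thesis unfolding linf_dist_def by simp
qed

lemma width_cball:
  assumes "\<rho> > 0"
  shows "width (cball c \<rho>) (c::real^'n) = \<rho> / sqrt (real CARD('n))"
proof -
  let ?d = "real CARD('n)"
  have d0: "?d > 0" by simp
  define y where "y = c + (\<chi> j. \<rho> / sqrt ?d)"
  have "(norm (c - y))^2 = (\<Sum>j\<in>(UNIV::'n set). (\<rho> / sqrt ?d)^2)"
    unfolding norm_sq_vec y_def by (simp add: power2_eq_square)
  also have "\<dots> = \<rho>^2" using d0 by (simp add: power_divide)
  finally have "norm (c - y) = \<rho>" using assms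
    by (metis norm_ge_zero power2_eq_imp_eq less_imp_le)
  then have ysph: "y \<in> sphere c \<rho>" by (simp add: dist_norm)
  have ly: "linf_dist c y = \<rho> / sqrt ?d"
    by (rule linf_const) (use assms in \<open>simp add: y_def\<close>)
  have lb: "\<rho> / sqrt ?d \<le> linf_dist c z" if "z \<in> sphere c \<rho>" for z
  proof -
    let ?m = "linf_dist c z"
    have "\<rho>^2 = (norm (c - z))^2" using that by (simp add: dist_norm)
    also have "\<dots> = (\<Sum>j\<in>UNIV. (c$j - z$j)^2)" by (simp add: norm_sq_vec)
    also have "\<dots> \<le> (\<Sum>j\<in>(UNIV::'n set). ?m^2)"
    proof (rule sum_mono)
      fix j :: 'n
      have "\<bar>c$j - z$j\<bar> \<le> ?m" by (rule linf_ge)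
      then show "(c$j - z$j)^2 \<le> ?m^2"
        by (metis abs_ge_zero abs_le_square_iff order_trans power2_abs abs_of_nonneg
              linf_ge)
    qed
    also have "\<dots> = ?d * ?m^2" by simp
    finally have h: "\<rho>^2 \<le> ?d * ?m^2" .
    have m0: "?m \<ge> 0" by (meson abs_ge_zero linf_ge order_trans)
    have "\<rho>^2 \<le> (sqrt ?d * ?m)^2" using h d0 by (simp add: power_mult_distrib)
    moreover have "0 \<le> sqrt ?d * ?m" using m0 by simp
    ultimately have "\<rho> \<le> sqrt ?d * ?m" by (rule power2_le_imp_le)
    then show ?thesis using d0 by (simp add: divide_le_eq mult.commute)
  qed
  have "Inf (linf_dist c ` sphere c \<rho>) = \<rho> / sqrt ?d"
  proof (rule cInf_eq_minimum)
    show "\<rho> / sqrt ?d \<in> linf_dist c ` sphere c \<rho>" using ysph ly by (metis image_eqI)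
    show "\<rho> / sqrt ?d \<le> x" if "x \<in> linf_dist c ` sphere c \<rho>" for x
      using that lb by auto
  qed
  then show ?thesis unfolding width_def using assms by simp
qed

lemma anc_point_nth:
  fixes c :: "real^'n" and w :: real
  defines "s \<equiv> (2::real) powr (of_int \<lfloor>log 2 w\<rfloor> + 1)"
  shows "(\<exists>n::int. anc_point c w $ j = s * of_int n) \<and> \<bar>c$j - anc_point c w $ j\<bar> \<le> s/2"
proof -
  define i where "i = \<lfloor>log 2 w\<rfloor>"
  define h where "h = (2::real) powr (of_int i)"
  have s_def': "s = (2::real) powr (of_int i + 1)" unfolding s_def i_def by simp
  have sh: "s = 2 * h" unfolding s_def' h_def by (simp add: powr_add)
  have h0: "h > 0" unfolding h_def by simp
  define z where "z = s * of_int \<lfloor>c$j / s\<rfloor>"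
  define f where "f = c$j - z"
  have s0: "s > 0" using sh h0 by simp
  have f0: "0 \<le> f"
  proof -
    have "of_int \<lfloor>c$j / s\<rfloor> \<le> c$j / s" by linarith
    then have "s * of_int \<lfloor>c$j / s\<rfloor> \<le> c$j" using s0 by (simp add: le_divide_eq mult.commute)
    then show ?thesis unfolding f_def z_def by simp
  qed
  have f1: "f < s" unfolding f_def z_def using s0
  proof -
    have "c$j / s < of_int \<lfloor>c$j / s\<rfloor> + 1" by linarith
    then have "c$j < s * (of_int \<lfloor>c$j / s\<rfloor> + 1)" using s0 by (metis mult.commute pos_divide_less_eq)
    then show "c $ j - s * of_int \<lfloor>c $ j / s\<rfloor> < s" by (simp add: algebra_simps)
  qed
  have val: "anc_point c w $ j = (if f < h then z else z + s)"
    unfolding anc_point_def Let_def s_def' h_def z_def f_def i_def by simp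
  show ?thesis
  proof (cases "f < h")
    case True
    then show ?thesis using val f0 sh unfolding f_def z_def by auto
  next
    case False
    have "anc_point c w $ j = s * of_int (\<lfloor>c$j / s\<rfloor> + 1)" using val False unfolding z_def
      by (simp add: algebra_simps)
    moreover have "\<bar>c$j - anc_point c w $ j\<bar> \<le> s/2" using val False f1 sh unfolding f_def
      by auto
    ultimately show ?thesis by blast
  qed
qed

definition dl :: "real \<Rightarrow> int \<Rightarrow> real" where
  "dl t n = max (\<bar>real_of_int n - t\<bar> - 1/2) 0"

definition Gset :: "('n::finite \<Rightarrow> real) \<Rightarrow> real \<Rightarrow> ('n \<Rightarrow> int) set" where
  "Gset \<theta> T = {m. (\<Sum>j\<in>UNIV. (dl (\<theta> j) (m j))^2) < T^2}"

definition win :: "real \<Rightarrow> real \<Rightarrow> int set" where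
  "win t a = {n::int. \<bar>real_of_int n - t\<bar> < a}"

lemma win_sub: "win t a \<subseteq> {\<lfloor>t - a\<rfloor> + 1 ..< \<lfloor>t - a\<rfloor> + 1 + \<lceil>2*a\<rceil>}"
proof
  fix n assume "n \<in> win t a"
  then have a: "t - a < n" "n < t + a" unfolding win_def by auto
  have "\<lfloor>t - a\<rfloor> + 1 \<le> n" using a(1) by linarith
  moreover have "n < \<lfloor>t - a\<rfloor> + 1 + \<lceil>2*a\<rceil>"
  proof -
    have "real_of_int n < t + a" by (rule a(2))
    also have "\<dots> < real_of_int (\<lfloor>t - a\<rfloor> + 1) + 2*a" by linarith
    also have "\<dots> \<le> real_of_int (\<lfloor>t - a\<rfloor> + 1 + \<lceil>2*a\<rceil>)" by simp
    finally show ?thesis by linarith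
  qed
  ultimately show "n \<in> {\<lfloor>t - a\<rfloor> + 1 ..< \<lfloor>t - a\<rfloor> + 1 + \<lceil>2*a\<rceil>}" by simp
qed

lemma win_finite[simp]: "finite (win t a)"
  using win_sub finite_subset by blast

lemma win_card: "card (win t a) \<le> nat \<lceil>2*a\<rceil>"
proof -
  have "card (win t a) \<le> card {\<lfloor>t - a\<rfloor> + 1 ..< \<lfloor>t - a\<rfloor> + 1 + \<lceil>2*a\<rceil>}"
    by (rule card_mono[OF _ win_sub]) simp
  also have "\<dots> = nat \<lceil>2*a\<rceil>" by simp
  finally show ?thesis .
qed

lemma win_aligned3:
  assumes "a \<le> 3" shows "win (real_of_int k) a \<subseteq> {k-2..k+2}"
  using assms unfolding win_def by auto

lemma win_aligned2:
  assumes "a \<le> 2" shows "win (real_of_int k) a \<subseteq> {k-1..k+1}"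
  using assms unfolding win_def by auto

lemma dl_nonneg: "dl t n \<ge> 0" unfolding dl_def by simp

lemma Gset_sub_box:
  assumes "T > 0"
  shows "Gset \<theta> T \<subseteq> PiE UNIV (\<lambda>j. win (\<theta> j) (T + 1/2))"
proof
  fix m assume m: "m \<in> Gset \<theta> T"
  have "m j \<in> win (\<theta> j) (T + 1/2)" for j
  proof -
    have "(dl (\<theta> j) (m j))^2 \<le> (\<Sum>j\<in>UNIV. (dl (\<theta> j) (m j))^2)"
      by (rule member_le_sum) auto
    also have "\<dots> < T^2" using m unfolding Gset_def by simp
    finally have "dl (\<theta> j) (m j) < T" using assms dl_nonneg
      by (meson abs_of_pos power2_less_imp_less less_imp_le)
    then show ?thesis unfolding dl_def win_def by auto
  qed
  then show "m \<in> PiE UNIV (\<lambda>j. win (\<theta> j) (T + 1/2))" by (simp add: PiE_iff)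
qed

lemma Gset_finite:
  assumes "T > 0" shows "finite (Gset \<theta> T)"
  by (rule finite_subset[OF Gset_sub_box[OF assms]]) (simp add: finite_PiE)

lemma Gset_card_box:
  assumes "T > 0" and "\<And>j. card (win (\<theta> j) (T + 1/2)) \<le> B j"
  shows "card (Gset \<theta> T) \<le> (\<Prod>j\<in>UNIV. B j)"
proof -
  have "card (Gset \<theta> T) \<le> card (PiE UNIV (\<lambda>j. win (\<theta> j) (T + 1/2)))"
    by (rule card_mono[OF _ Gset_sub_box[OF assms(1)]]) (simp add: finite_PiE)
  also have "\<dots> = (\<Prod>j\<in>UNIV. card (win (\<theta> j) (T + 1/2)))" by (simp add: card_PiE)
  also have "\<dots> \<le> (\<Prod>j\<in>UNIV. B j)" by (rule prod_mono) (use assms(2) in auto)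
  finally show ?thesis .
qed

lemma Gset_card_box_const:
  fixes \<theta> :: "'n::finite \<Rightarrow> real"
  assumes "T > 0" and "\<And>j. card (win (\<theta> j) (T + 1/2)) \<le> b"
  shows "card (Gset \<theta> T) \<le> b ^ CARD('n)"
  using Gset_card_box[of T \<theta> "\<lambda>_. b", OF assms] by simp

definition pp :: real where "pp = 12/11"
definition lam :: real where "lam = 4 * ln pp"

lemma lam_pos: "lam > 0" unfolding lam_def pp_def by simp

definition fw :: "real \<Rightarrow> real" where "fw x = exp (- lam * x^2)"

lemma fw_anti: assumes "0 \<le> x" "x \<le> y" shows "fw y \<le> fw x"
proof -
  have "x^2 \<le> y^2" using assms by (simp add: power_mono)
  then show ?thesis unfolding fw_def using lam_pos by (simp add: mult_left_mono)
qed

lemma fw_half: "fw (real j / 2) = (11/12) ^ (j^2)"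
proof -
  have "- lam * (real j / 2)^2 = - (real (j^2) * ln pp)"
    unfolding lam_def by (simp add: power2_eq_square)
  then have "fw (real j / 2) = inverse (exp (real (j^2) * ln pp))"
    unfolding fw_def by (simp add: exp_minus)
  also have "\<dots> = inverse (exp (ln pp) ^ (j^2))" by (simp only: exp_of_nat_mult)
  also have "\<dots> = inverse (pp ^ (j^2))" by (simp add: pp_def)
  also have "\<dots> = (inverse (12/11)) ^ (j^2)" unfolding pp_def by (rule power_inverse[symmetric])
  also have "\<dots> = (11/12) ^ (j^2)" by simp
  finally show ?thesis .
qed

lemma fw_zero: "fw 0 = 1" unfolding fw_def by simp

lemma dl_n0: "dl t \<lfloor>t + 1/2\<rfloor> = 0"
  unfolding dl_def by linarith

lemma dl_pair:
  fixes k :: nat and t :: real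
  assumes "k \<ge> 1"
  defines "n0 \<equiv> \<lfloor>t + 1/2\<rfloor>"
  shows "dl t (n0 + int k) \<ge> real k - 1" "dl t (n0 - int k) \<ge> real k - 1"
        "dl t (n0 + int k) + dl t (n0 - int k) \<ge> 2 * real k - 1"
proof -
  define e where "e = real_of_int n0 - t"
  have e: "-1/2 < e" "e \<le> 1/2" unfolding e_def n0_def by linarith+
  have k1: "real k \<ge> 1" using assms by simp
  have a: "dl t (n0 + int k) = real k + e - 1/2"
    unfolding dl_def e_def using e k1 by (simp add: e_def)
  have b: "dl t (n0 - int k) = real k - e - 1/2"
    unfolding dl_def e_def using e k1 by (simp add: e_def)
  show "dl t (n0 + int k) \<ge> real k - 1" "dl t (n0 - int k) \<ge> real k - 1"
       "dl t (n0 + int k) + dl t (n0 - int k) \<ge> 2 * real k - 1"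
    using a b e by auto
qed

lemma fw_pair:
  fixes k :: nat and t :: real
  assumes "k \<ge> 1"
  defines "n0 \<equiv> \<lfloor>t + 1/2\<rfloor>"
  shows "fw (dl t (n0 + int k)) + fw (dl t (n0 - int k))
         \<le> (11/12) ^ ((2*k-2)^2) + (11/12) ^ ((2*k-1)^2)"
proof -
  let ?u = "dl t (n0 + int k)" and ?v = "dl t (n0 - int k)"
  have u: "?u \<ge> real k - 1" and v: "?v \<ge> real k - 1" and uv: "?u + ?v \<ge> 2 * real k - 1"
    using dl_pair[OF assms(1), of t] unfolding n0_def by auto
  have k1: "real k \<ge> 1" using assms by simp
  have g1: "fw (real k - 1) = (11/12) ^ ((2*k-2)^2)"
  proof -
    have "real k - 1 = real (2*k-2) / 2" using assms by (simp add: of_nat_diff)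
    then show ?thesis by (simp only: fw_half)
  qed
  have g2: "fw (real k - 1/2) = (11/12) ^ ((2*k-1)^2)"
  proof -
    have "real k - 1/2 = real (2*k-1) / 2" using assms by (simp add: of_nat_diff)
    then show ?thesis by (simp only: fw_half)
  qed
  have "fw ?u + fw ?v \<le> fw (real k - 1) + fw (real k - 1/2)"
  proof (cases "?u \<le> ?v")
    case True
    then have "?v \<ge> real k - 1/2" using uv by linarith
    then have "fw ?v \<le> fw (real k - 1/2)" using k1 by (intro fw_anti) auto
    moreover have "fw ?u \<le> fw (real k - 1)" using u k1 by (intro fw_anti) auto
    ultimately show ?thesis by simp
  next
    case False
    then have "?u \<ge> real k - 1/2" using uv by linarith
    then have "fw ?u \<le> fw (real k - 1/2)" using k1 by (intro fw_anti) auto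
    moreover have "fw ?v \<le> fw (real k - 1)" using v k1 by (intro fw_anti) auto
    ultimately show ?thesis by simp
  qed
  then show ?thesis using g1 g2 by simp
qed

lemma fw_interval:
  fixes t :: real
  defines "n0 \<equiv> \<lfloor>t + 1/2\<rfloor>"
  shows "(\<Sum>n\<in>{n0 - int N..n0 + int N}. fw (dl t n)) \<le> 1 + (\<Sum>j<2*N. (11/12::real) ^ (j^2))"
proof (induction N)
  case 0
  then show ?case using dl_n0[of t] by (simp add: n0_def fw_zero)
next
  case (Suc N)
  have eq: "{n0 - int (Suc N)..n0 + int (Suc N)}
      = insert (n0 - int (Suc N)) (insert (n0 + int (Suc N)) {n0 - int N..n0 + int N})"
    by auto
  have "(\<Sum>n\<in>{n0 - int (Suc N)..n0 + int (Suc N)}. fw (dl t n))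
      = fw (dl t (n0 - int (Suc N))) + fw (dl t (n0 + int (Suc N)))
        + (\<Sum>n\<in>{n0 - int N..n0 + int N}. fw (dl t n))"
    unfolding eq by simp
  also have "\<dots> \<le> ((11/12) ^ ((2*Suc N-2)^2) + (11/12) ^ ((2*Suc N-1)^2))
        + (1 + (\<Sum>j<2*N. (11/12::real) ^ (j^2)))"
    using fw_pair[of "Suc N" t] Suc.IH unfolding n0_def by simp
  also have "\<dots> = 1 + (\<Sum>j<2*Suc N. (11/12::real) ^ (j^2))"
    by simp
  finally show ?case .
qed

lemma qE: "(\<Sum>j<8. (11/12::real)^(j^2)) + (11/12)^64 / (1 - (11/12)^8) \<le> 351/100"
  by (simp add: lessThan_nat_numeral power2_eq_square power_divide)

lemma sum_split_gen: "(\<Sum>j<a+(k::nat). f j) = (\<Sum>j<a. f j) + (\<Sum>i<k. f (a+i)::real)"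
  by (induction k) auto

lemma sum_split8: "(\<Sum>j<8+(k::nat). f j) = (\<Sum>j<8. f j) + (\<Sum>i<k. f (8+i)::real)"
  by (rule sum_split_gen)

lemma geo_le: assumes "0 \<le> x" "x < 1" shows "(\<Sum>i<k. x^i) \<le> 1 / (1 - (x::real))"
proof -
  have "(\<Sum>i<k. x^i) = (1 - x^k) / (1 - x)" using assms by (simp add: sum_gp_strict)
  also have "\<dots> \<le> 1 / (1 - x)" using assms by (intro divide_right_mono) auto
  finally show ?thesis .
qed

lemma qsum_bound: "(\<Sum>j<M. (11/12::real)^(j^2)) \<le> 351/100"
proof -
  let ?q = "11/12::real"
  define k where "k = M - 8"
  have A: "(\<Sum>j<M. ?q^(j^2)) \<le> (\<Sum>j<8+k. ?q^(j^2))"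
    by (rule sum_mono2) (auto simp: k_def)
  have B: "(\<Sum>j<8+k. ?q^(j^2)) = (\<Sum>j<8. ?q^(j^2)) + (\<Sum>i<k. ?q^((8+i)^2))"
    by (rule sum_split8)
  have C: "(\<Sum>i<k. ?q^((8+i)^2)) \<le> (\<Sum>i<k. ?q^64 * (?q^8)^i)"
  proof (rule sum_mono)
    fix i assume "i \<in> {..<k}"
    have "64 + 8*i \<le> (8+i)^2" by (simp add: power2_eq_square algebra_simps)
    then have "?q^((8+i)^2) \<le> ?q^(64 + 8*i)" by (intro power_decreasing) auto
    also have "\<dots> = ?q^64 * (?q^8)^i" by (simp add: power_add power_mult)
    finally show "?q^((8+i)^2) \<le> ?q^64 * (?q^8)^i" .
  qed
  have D: "(\<Sum>i<k. ?q^64 * (?q^8)^i) = ?q^64 * (\<Sum>i<k. (?q^8)^i)" by (simp add: sum_distrib_left)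
  have E: "?q^64 * (\<Sum>i<k. (?q^8)^i) \<le> ?q^64 / (1 - ?q^8)"
    using mult_left_mono[OF geo_le[of "?q^8" k], of "?q^64"] by (simp add: power_less_one_iff)
  have "(\<Sum>j<M. ?q^(j^2)) \<le> (\<Sum>j<8. ?q^(j^2)) + ?q^64 / (1 - ?q^8)"
    using A B C D E by linarith
  then show ?thesis using qE by linarith
qed

lemma fw_nonneg: "fw x \<ge> 0" unfolding fw_def by simp

lemma finite_int_in_interval:
  fixes A :: "int set"
  assumes "finite A" shows "\<exists>N::nat. A \<subseteq> {c - int N..c + int N}"
  using assms
proof (induction A rule: finite_induct)
  case empty then show ?case by auto
next
  case (insert a A)
  then obtain N where N: "A \<subseteq> {c - int N..c + int N}" by auto
  define N' where "N' = max N (nat \<bar>a - c\<bar>)"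
  have "int N \<le> int N'" "\<bar>a - c\<bar> \<le> int N'" unfolding N'_def by auto
  then have "insert a A \<subseteq> {c - int N'..c + int N'}"
    using N by force
  then show ?case by blast
qed

lemma coord_sum_bound:
  assumes "finite A"
  shows "(\<Sum>n\<in>A. fw (dl t n)) \<le> 451/100"
proof -
  define n0 where "n0 = \<lfloor>t + 1/2\<rfloor>"
  obtain N :: nat where N: "A \<subseteq> {n0 - int N..n0 + int N}"
    using finite_int_in_interval[OF assms] by blast
  have "(\<Sum>n\<in>A. fw (dl t n)) \<le> (\<Sum>n\<in>{n0 - int N..n0 + int N}. fw (dl t n))"
    by (rule sum_mono2[OF _ N]) (auto simp: fw_nonneg)
  also have "\<dots> \<le> 1 + (\<Sum>j<2*N. (11/12::real) ^ (j^2))"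
    unfolding n0_def by (rule fw_interval)
  also have "\<dots> \<le> 1 + 351/100" using qsum_bound by simp
  finally show ?thesis by simp
qed

lemma exp_lam_nat: "exp (lam * real k) = ((12/11)^4) ^ k"
proof -
  have "exp (lam * real k) = exp lam ^ k" by (simp add: exp_of_nat_mult[symmetric] mult.commute)
  moreover have "exp lam = (12/11)^4"
    unfolding lam_def pp_def by (simp add: exp_of_nat_mult[where n=4, simplified])
  ultimately show ?thesis by simp
qed

lemma chernoff:
  fixes \<theta> :: "'n::finite \<Rightarrow> real"
  assumes T0: "T > 0" and Td: "T^2 \<le> real CARD('n)"
  shows "real (card (Gset \<theta> T)) \<le> (641/100) ^ CARD('n)"
proof -
  let ?W = "\<lambda>j. win (\<theta> j) (T + 1/2)"
  let ?P = "PiE UNIV ?W"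
  let ?S = "\<lambda>m. (\<Sum>j\<in>UNIV. (dl (\<theta> j) (m j))^2)"
  have finP: "finite ?P" by (simp add: finite_PiE)
  have GP: "Gset \<theta> T \<subseteq> ?P" by (rule Gset_sub_box[OF T0])
  have "real (card (Gset \<theta> T)) = (\<Sum>m\<in>Gset \<theta> T. 1)" by simp
  also have "\<dots> \<le> (\<Sum>m\<in>Gset \<theta> T. exp (lam * (T^2 - ?S m)))"
  proof (rule sum_mono)
    fix m assume "m \<in> Gset \<theta> T"
    then have "?S m < T^2" unfolding Gset_def by simp
    then have "0 \<le> lam * (T^2 - ?S m)" using lam_pos by simp
    then show "1 \<le> exp (lam * (T^2 - ?S m))" by simp
  qed
  also have "\<dots> \<le> (\<Sum>m\<in>?P. exp (lam * (T^2 - ?S m)))"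
    by (rule sum_mono2[OF finP GP]) simp
  also have "\<dots> = (\<Sum>m\<in>?P. exp (lam * T^2) * (\<Prod>j\<in>UNIV. fw (dl (\<theta> j) (m j))))"
  proof (rule sum.cong[OF refl])
    fix m
    have "exp (lam * (T^2 - ?S m)) = exp (lam * T^2) * exp (\<Sum>j\<in>UNIV. - lam * (dl (\<theta> j) (m j))^2)"
      by (simp add: right_diff_distrib exp_diff sum_negf sum_distrib_left exp_minus divide_inverse)
    also have "\<dots> = exp (lam * T^2) * (\<Prod>j\<in>UNIV. fw (dl (\<theta> j) (m j)))"
      by (simp add: exp_sum fw_def)
    finally show "exp (lam * (T^2 - ?S m)) = exp (lam * T^2) * (\<Prod>j\<in>UNIV. fw (dl (\<theta> j) (m j)))" .
  qed
  also have "\<dots> = exp (lam * T^2) * (\<Sum>m\<in>?P. (\<Prod>j\<in>UNIV. fw (dl (\<theta> j) (m j))))"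
    by (simp add: sum_distrib_left)
  also have "(\<Sum>m\<in>?P. (\<Prod>j\<in>UNIV. fw (dl (\<theta> j) (m j)))) = (\<Prod>j\<in>UNIV. \<Sum>n\<in>?W j. fw (dl (\<theta> j) n))"
    by (rule prod_sum_PiE[symmetric]) auto
  also have "(\<Prod>j\<in>(UNIV::'n set). \<Sum>n\<in>?W j. fw (dl (\<theta> j) n)) \<le> (\<Prod>j\<in>(UNIV::'n set). 451/100)"
    by (rule prod_mono) (auto intro!: sum_nonneg fw_nonneg coord_sum_bound simp del: divide_const_simps)
  also have "(\<Prod>j\<in>(UNIV::'n set). 451/100::real) = (451/100) ^ CARD('n)" by simp
  finally have A: "real (card (Gset \<theta> T)) \<le> exp (lam * T^2) * (451/100) ^ CARD('n)"
    by (simp add: mult_left_mono)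
  have "exp (lam * T^2) \<le> exp (lam * real CARD('n))"
    using Td lam_pos by (simp add: mult_left_mono)
  also have "\<dots> = ((12/11)^4) ^ CARD('n)" by (rule exp_lam_nat)
  finally have B: "exp (lam * T^2) \<le> ((12/11)^4) ^ CARD('n)" .
  have "real (card (Gset \<theta> T)) \<le> ((12/11)^4) ^ CARD('n) * (451/100) ^ CARD('n)"
    using A B by (meson mult_right_mono order_trans zero_le_power zero_le_divide_iff zero_le_numeral)
  also have "\<dots> = ((12/11)^4 * (451/100)) ^ CARD('n)" by (rule power_mult_distrib[symmetric])
  also have "\<dots> \<le> (641/100) ^ CARD('n)" by (rule power_mono) (auto simp: power_divide)
  finally show ?thesis .
qed

lemma Gset_AB:
  fixes \<theta> :: "'n::finite \<Rightarrow> real"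
  assumes fin: "\<And>j. finite (A j)" and BA: "\<And>j. B j \<subseteq> A j"
    and GA: "Gset \<theta> T \<subseteq> PiE UNIV A" and GB: "Gset \<theta> T \<inter> PiE UNIV B = {}"
  shows "card (Gset \<theta> T) \<le> (\<Prod>j\<in>UNIV. card (A j)) - (\<Prod>j\<in>UNIV. card (B j))"
proof -
  have sub: "PiE UNIV B \<subseteq> PiE UNIV A" using BA by (auto simp: PiE_iff)
  have finA: "finite (PiE UNIV A)" using fin by (simp add: finite_PiE)
  have "card (Gset \<theta> T) \<le> card (PiE UNIV A - PiE UNIV B)"
    by (rule card_mono) (use finA GA GB in auto)
  also have "\<dots> = card (PiE UNIV A) - card (PiE UNIV B)"
    by (rule card_Diff_subset[OF finite_subset[OF sub finA] sub])
  also have "\<dots> = (\<Prod>j\<in>UNIV. card (A j)) - (\<Prod>j\<in>UNIV. card (B j))"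
    by (simp add: card_PiE)
  finally show ?thesis .
qed

lemma sum_two_le:
  fixes f :: "'n::finite \<Rightarrow> real"
  assumes "\<And>j. f j \<ge> 0" "i \<noteq> j"
  shows "f i + f j \<le> (\<Sum>l\<in>UNIV. f l)"
proof -
  have "f i + f j = (\<Sum>l\<in>{i,j}. f l)" using assms(2) by simp
  also have "\<dots> \<le> (\<Sum>l\<in>UNIV. f l)" by (rule sum_mono2) (use assms in auto)
  finally show ?thesis .
qed

lemma card_PiE_one_special:
  fixes j :: "'n::finite"
  assumes "card (X j) = cx" "\<And>i. card (Y i) = cy"
  shows "card (PiE UNIV (\<lambda>i. if i = j then X i else Y i)) = cx * cy ^ (CARD('n) - 1)"
proof -
  have "card (PiE UNIV (\<lambda>i. if i = j then X i else Y i)) = (\<Prod>i\<in>UNIV. card (if i = j then X i else Y i))"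
    by (simp add: card_PiE)
  also have "\<dots> = card (X j) * (\<Prod>i\<in>UNIV - {j}. card (if i = j then X i else Y i))"
    by (subst prod.remove[of _ j]) auto
  also have "(\<Prod>i\<in>UNIV - {j}. card (if i = j then X i else Y i)) = (\<Prod>i\<in>UNIV - {j}. cy)"
    by (rule prod.cong) (auto simp: assms)
  also have "\<dots> = cy ^ (CARD('n) - 1)" by (simp add: card_Diff_singleton)
  finally show ?thesis using assms by simp
qed

lemma Gset_d3:
  fixes k :: "'n::finite \<Rightarrow> int"
  assumes d3: "CARD('n) = 3" and T0: "T > 0" and T3: "T^2 \<le> 3"
  shows "card (Gset (\<lambda>j. real_of_int (k j)) T) \<le> 81"
proof -
  let ?G = "Gset (\<lambda>j. real_of_int (k j)) T"
  let ?Q = "PiE UNIV (\<lambda>i. {k i - 1..k i + 1})"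
  let ?P = "\<lambda>j. PiE UNIV (\<lambda>i. if i = j then {k i - 2, k i + 2} else {k i - 1..k i + 1})"
  have Tle: "T \<le> 2"
  proof (rule power2_le_imp_le)
    show "T^2 \<le> 2^2" using T3 by simp
  qed simp
  have sub: "?G \<subseteq> ?Q \<union> (\<Union>j. ?P j)"
  proof
    fix m assume mG: "m \<in> ?G"
    have box: "m i \<in> {k i - 2..k i + 2}" for i
    proof -
      have "m i \<in> win (real_of_int (k i)) (T + 1/2)"
        using Gset_sub_box[OF T0] mG by (auto simp: PiE_iff)
      then show ?thesis using win_aligned3[of "T + 1/2" "k i"] Tle by auto
    qed
    show "m \<in> ?Q \<union> (\<Union>j. ?P j)"
    proof (cases "\<forall>i. m i \<in> {k i - 1..k i + 1}")
      case True then show ?thesis by (auto simp: PiE_iff)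
    next
      case False
      then obtain j where j: "m j \<notin> {k j - 1..k j + 1}" by blast
      have mj: "m j \<in> {k j - 2, k j + 2}" using box[of j] j by auto
      have "m i \<in> {k i - 1..k i + 1}" if "i \<noteq> j" for i
      proof (rule ccontr)
        assume "m i \<notin> {k i - 1..k i + 1}"
        then have mi: "m i \<in> {k i - 2, k i + 2}" using box[of i] by auto
        have di: "dl (real_of_int (k i)) (m i) = 3/2" using mi unfolding dl_def by auto
        have dj: "dl (real_of_int (k j)) (m j) = 3/2" using mj unfolding dl_def by auto
        have "(dl (real_of_int (k i)) (m i))^2 + (dl (real_of_int (k j)) (m j))^2
              \<le> (\<Sum>l\<in>UNIV. (dl (real_of_int (k l)) (m l))^2)"
          by (rule sum_two_le) (use that in auto)
        also have "\<dots> < T^2" using mG unfolding Gset_def by simp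
        finally show False using di dj T3 by (simp add: power2_eq_square)
      qed
      then have "m \<in> ?P j" using mj by (auto simp: PiE_iff)
      then show ?thesis by blast
    qed
  qed
  have "card ?G \<le> card (?Q \<union> (\<Union>j. ?P j))"
    by (rule card_mono[OF _ sub]) (simp add: finite_PiE)
  also have "\<dots> \<le> card ?Q + card (\<Union>j. ?P j)" by (rule card_Un_le)
  also have "card (\<Union>j. ?P j) \<le> (\<Sum>j\<in>UNIV. card (?P j))" by (rule card_UN_le) simp
  also have "card ?Q = 27" using d3 by (simp add: card_PiE)
  also have "(\<Sum>j\<in>(UNIV::'n set). card (?P j)) = 54"
  proof -
    have "card (?P j) = 18" for j
    proof -
      have "card (?P j) = 2 * 3 ^ (CARD('n) - 1)"
        by (rule card_PiE_one_special) auto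
      then show ?thesis using d3 by simp
    qed
    then show ?thesis using d3 by simp
  qed
  finally show ?thesis by simp
qed

lemma two_univ:
  assumes "CARD('n::finite) = 2"
  obtains j1 j2 :: "'n::finite" where "j1 \<noteq> j2" "UNIV = {j1, j2}"
  using assms unfolding card_2_iff by blast

lemma Gset_box_T:
  fixes \<theta> :: "'n::finite \<Rightarrow> real"
  assumes "T > 0" "T \<le> R"
  shows "card (Gset \<theta> T) \<le> (nat \<lceil>2*R + 1\<rceil>) ^ CARD('n)"
proof (rule Gset_card_box_const[OF assms(1)])
  fix j
  have "card (win (\<theta> j) (T + 1/2)) \<le> nat \<lceil>2*(T + 1/2)\<rceil>" by (rule win_card)
  also have "\<dots> \<le> nat \<lceil>2*R + 1\<rceil>" using assms by (intro nat_mono ceiling_mono) auto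
  finally show "card (win (\<theta> j) (T + 1/2)) \<le> nat \<lceil>2*R + 1\<rceil>" .
qed

lemma Gset_box_aligned5:
  fixes k :: "'n::finite \<Rightarrow> int"
  assumes "T > 0" "T + 1/2 \<le> 3"
  shows "card (Gset (\<lambda>j. real_of_int (k j)) T) \<le> 5 ^ CARD('n)"
proof (rule Gset_card_box_const[OF assms(1)])
  fix j
  have "card (win (real_of_int (k j)) (T + 1/2)) \<le> card {k j - 2..k j + 2}"
    by (rule card_mono) (use win_aligned3 assms in auto)
  then show "card (win (real_of_int (k j)) (T + 1/2)) \<le> 5" by simp
qed

lemma Gset_box_aligned3:
  fixes k :: "'n::finite \<Rightarrow> int"
  assumes "T > 0" "T + 1/2 \<le> 2"
  shows "card (Gset (\<lambda>j. real_of_int (k j)) T) \<le> 3 ^ CARD('n)"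
proof (rule Gset_card_box_const[OF assms(1)])
  fix j
  have "card (win (real_of_int (k j)) (T + 1/2)) \<le> card {k j - 1..k j + 1}"
    by (rule card_mono) (use win_aligned2 assms in auto)
  then show "card (win (real_of_int (k j)) (T + 1/2)) \<le> 3" by simp
qed

lemma Gset_top_half:
  fixes \<theta> :: "'n::finite \<Rightarrow> real"
  assumes T0: "T > 0" and T1: "T \<le> 1" and jz: "\<theta> jz = real_of_int kz + 1/2"
  shows "card (Gset \<theta> T) \<le> 2 * 3 ^ (CARD('n) - 1)"
proof -
  have "card (Gset \<theta> T) \<le> (\<Prod>j\<in>UNIV. (if j = jz then 2 else 3))"
  proof (rule Gset_card_box[OF T0])
    fix j
    show "card (win (\<theta> j) (T + 1/2)) \<le> (if j = jz then 2 else 3)"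
    proof (cases "j = jz")
      case True
      have "win (\<theta> j) (T + 1/2) \<subseteq> {kz..kz+1}" using True jz T1 unfolding win_def by auto
      then have "card (win (\<theta> j) (T + 1/2)) \<le> card {kz..kz+1}" by (intro card_mono) auto
      then show ?thesis using True by simp
    next
      case False
      have "card (win (\<theta> j) (T + 1/2)) \<le> nat \<lceil>2*(T + 1/2)\<rceil>" by (rule win_card)
      also have "\<dots> \<le> nat \<lceil>3::real\<rceil>" using T1 by (intro nat_mono ceiling_mono) auto
      finally show ?thesis using False by simp
    qed
  qed
  also have "(\<Prod>j\<in>UNIV. (if j = jz then 2 else 3::nat)) = 2 * (\<Prod>j\<in>UNIV - {jz}. (if j = jz then 2 else 3))"
    by (subst prod.remove[of _ jz]) auto
  also have "(\<Prod>j\<in>UNIV - {jz}. (if j = jz then 2 else 3::nat)) = (\<Prod>j\<in>UNIV - {jz}. 3)"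
    by (rule prod.cong) auto
  also have "\<dots> = 3 ^ (CARD('n) - 1)" by (simp add: card_Diff_singleton)
  finally show ?thesis .
qed

lemma nat_15: "(a1::nat) \<le> 4 \<Longrightarrow> a2 \<le> 4 \<Longrightarrow> a1 \<le> 3 + b1 \<Longrightarrow> a2 \<le> 3 + b2 \<Longrightarrow> a1 * a2 - b1 * b2 \<le> 15"
proof -
  assume a: "a1 \<le> 4" "a2 \<le> 4" "a1 \<le> 3 + b1" "a2 \<le> 3 + b2"
  show ?thesis
  proof (cases "a1 \<le> 3")
    case True
    then have "a1 * a2 \<le> 3 * 4" using a by (intro mult_mono) auto
    then show ?thesis by linarith
  next
    case f1: False
    show ?thesis
    proof (cases "a2 \<le> 3")
      case True
      then have "a1 * a2 \<le> 4 * 3" using a by (intro mult_mono) auto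
      then show ?thesis by linarith
    next
      case False
      then have "a1 = 4" "a2 = 4" "b1 \<ge> 1" "b2 \<ge> 1" using a f1 by auto
      then have "0 < b1 * b2" by simp
      then show ?thesis using \<open>a1 = 4\<close> \<open>a2 = 4\<close> by (simp only:)
    qed
  qed
qed

lemma Gset_d2_15:
  fixes \<theta> :: "'n::finite \<Rightarrow> real"
  assumes d2: "CARD('n) = 2" and T0: "T > 0" and T2: "T^2 \<le> 2"
  shows "card (Gset \<theta> T) \<le> 15"
proof -
  obtain j1 j2 :: 'n where j12: "j1 \<noteq> j2" "UNIV = {j1, j2}" using two_univ[OF d2] by blast
  define A where "A j = win (\<theta> j) (T + 1/2)" for j
  define B where "B j = {n \<in> A j. 1 \<le> dl (\<theta> j) n}" for j
  have T32: "T \<le> 3/2"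
  proof (rule power2_le_imp_le)
    show "T^2 \<le> (3/2)^2" using T2 by (simp add: power2_eq_square)
  qed simp
  have finA: "finite (A j)" for j unfolding A_def by simp
  have "card (Gset \<theta> T) \<le> (\<Prod>j\<in>UNIV. card (A j)) - (\<Prod>j\<in>UNIV. card (B j))"
  proof (rule Gset_AB)
    show "finite (A j)" for j by (rule finA)
    show "B j \<subseteq> A j" for j unfolding B_def by auto
    show "Gset \<theta> T \<subseteq> PiE UNIV A" unfolding A_def by (rule Gset_sub_box[OF T0])
    show "Gset \<theta> T \<inter> PiE UNIV B = {}"
    proof (rule ccontr)
      assume "Gset \<theta> T \<inter> PiE UNIV B \<noteq> {}"
      then obtain m where mG: "m \<in> Gset \<theta> T" and mB: "m \<in> PiE UNIV B" by blast
      have "1 \<le> dl (\<theta> j) (m j)" for j using mB unfolding B_def by (auto simp: PiE_iff)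
      then have "1 \<le> (dl (\<theta> j) (m j))^2" for j by (simp add: one_le_power)
      note one = this
      have "1 + 1 \<le> (dl (\<theta> j1) (m j1))^2 + (dl (\<theta> j2) (m j2))^2" by (rule add_mono[OF one one])
      also have "\<dots> \<le> (\<Sum>l\<in>UNIV. (dl (\<theta> l) (m l))^2)" by (rule sum_two_le) (use j12 in auto)
      also have "\<dots> < T^2" using mG unfolding Gset_def by simp
      finally show False using T2 by simp
    qed
  qed
  also have "\<dots> = card (A j1) * card (A j2) - card (B j1) * card (B j2)"
  proof -
    have pr: "(\<Prod>j\<in>UNIV. f j) = f j1 * f j2" for f :: "'n \<Rightarrow> nat"
      by (subst j12(2)) (simp add: j12(1))
    show ?thesis by (simp only: pr)
  qed
  also have "\<dots> \<le> 15"
  proof (rule nat_15)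
    have a4: "card (A j) \<le> 4" for j
    proof -
      have "card (A j) \<le> nat \<lceil>2*(T + 1/2)\<rceil>" unfolding A_def by (rule win_card)
      also have "\<dots> \<le> nat \<lceil>4::real\<rceil>" using T32 by (intro nat_mono ceiling_mono) auto
      finally show ?thesis by simp
    qed
    have a3: "card (A j) \<le> 3 + card (B j)" for j
    proof -
      have "A j - B j \<subseteq> win (\<theta> j) (3/2)" unfolding A_def B_def win_def dl_def by auto
      then have "card (A j - B j) \<le> card (win (\<theta> j) (3/2))" by (intro card_mono) auto
      also have "\<dots> \<le> nat \<lceil>2*(3/2::real)\<rceil>" by (rule win_card)
      finally have "card (A j - B j) \<le> 3" by simp
      moreover have "card (A j) = card (A j - B j) + card (B j)"
        using finA[of j] by (metis B_def card_Diff_subset card_mono le_add_diff_inverse2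
              mem_Collect_eq subsetI finite_subset)
      ultimately show ?thesis by simp
    qed
    show "card (A j1) \<le> 4" "card (A j2) \<le> 4" "card (A j1) \<le> 3 + card (B j1)"
      "card (A j2) \<le> 3 + card (B j2)" using a4 a3 by auto
  qed
  finally show ?thesis .
qed

lemma nat_12: "((a1::nat) = 3 \<and> b1 = 0) \<or> (a1 = 4 \<and> b1 = 2) \<Longrightarrow> (a2 = 3 \<and> b2 = 0) \<or> (a2 = 4 \<and> b2 = 2)
   \<Longrightarrow> a1 * a2 - b1 * b2 \<le> 12"
  by auto

lemma Gset_d2_half:
  fixes h :: "'n::finite \<Rightarrow> int"
  assumes d2: "CARD('n) = 2" and T0: "T > 0" and T2: "T^2 \<le> 2"
  shows "card (Gset (\<lambda>j. real_of_int (h j) / 2) T) \<le> 12"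
proof -
  let ?\<theta> = "\<lambda>j. real_of_int (h j) / 2"
  obtain j1 j2 :: 'n where j12: "j1 \<noteq> j2" "UNIV = {j1, j2}" using two_univ[OF d2] by blast
  define A where "A j = (if even (h j) then {h j div 2 - 1..h j div 2 + 1} else {h j div 2 - 1..h j div 2 + 2})" for j
  define B where "B j = (if even (h j) then {} else {h j div 2 - 1, h j div 2 + 2})" for j
  have T32: "T \<le> 3/2"
  proof (rule power2_le_imp_le)
    show "T^2 \<le> (3/2)^2" using T2 by (simp add: power2_eq_square)
  qed simp
  have th_even: "?\<theta> j = real_of_int (h j div 2)" if "even (h j)" for j
    using that by (auto elim!: evenE)
  have th_odd: "?\<theta> j = real_of_int (h j div 2) + 1/2" if "odd (h j)" for j
    using that by (auto elim!: oddE)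
  have "card (Gset ?\<theta> T) \<le> (\<Prod>j\<in>UNIV. card (A j)) - (\<Prod>j\<in>UNIV. card (B j))"
  proof (rule Gset_AB)
    show "finite (A j)" for j unfolding A_def by simp
    show "B j \<subseteq> A j" for j unfolding A_def B_def by auto
    show "Gset ?\<theta> T \<subseteq> PiE UNIV A"
    proof
      fix m assume mG: "m \<in> Gset ?\<theta> T"
      have "m j \<in> A j" for j
      proof -
        have w: "m j \<in> win (?\<theta> j) (T + 1/2)"
          using Gset_sub_box[OF T0] mG by (auto simp: PiE_iff)
        show ?thesis
        proof (cases "even (h j)")
          case True
          then show ?thesis using w th_even[OF True] T32 unfolding A_def win_def by auto
        next
          case False
          then show ?thesis using w th_odd[OF False] T32 unfolding A_def win_def by auto
        qed
      qed
      then show "m \<in> PiE UNIV A" by (auto simp: PiE_iff)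
    qed
    show "Gset ?\<theta> T \<inter> PiE UNIV B = {}"
    proof (rule ccontr)
      assume "Gset ?\<theta> T \<inter> PiE UNIV B \<noteq> {}"
      then obtain m where mG: "m \<in> Gset ?\<theta> T" and mB: "m \<in> PiE UNIV B" by blast
      have "1 \<le> dl (?\<theta> j) (m j)" for j
      proof -
        have "m j \<in> B j" using mB by (auto simp: PiE_iff)
        then have "odd (h j)" "m j \<in> {h j div 2 - 1, h j div 2 + 2}" unfolding B_def
          by (auto split: if_splits)
        then show ?thesis unfolding dl_def th_odd[OF \<open>odd (h j)\<close>] by auto
      qed
      then have "1 \<le> (dl (?\<theta> j) (m j))^2" for j by (simp add: one_le_power)
      note one = this
      have "1 + 1 \<le> (dl (?\<theta> j1) (m j1))^2 + (dl (?\<theta> j2) (m j2))^2" by (rule add_mono[OF one one])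
      also have "\<dots> \<le> (\<Sum>l\<in>UNIV. (dl (?\<theta> l) (m l))^2)" by (rule sum_two_le) (use j12 in auto)
      also have "\<dots> < T^2" using mG unfolding Gset_def by simp
      finally show False using T2 by simp
    qed
  qed
  also have "\<dots> = card (A j1) * card (A j2) - card (B j1) * card (B j2)"
  proof -
    have pr: "(\<Prod>j\<in>UNIV. f j) = f j1 * f j2" for f :: "'n \<Rightarrow> nat"
      by (subst j12(2)) (simp add: j12(1))
    show ?thesis by (simp only: pr)
  qed
  also have "\<dots> \<le> 12"
    by (rule nat_12) (auto simp: A_def B_def)
  finally show ?thesis .
qed

definition sc :: "int \<Rightarrow> real" where "sc i = 2 powr (of_int i + 1)"

lemma sc_pos: "sc i > 0" unfolding sc_def by simp

definition reach :: "real \<Rightarrow> real^'n \<Rightarrow> (real^'n) set" where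
  "reach M h = {anc_point c (\<rho> / sqrt (real CARD('n))) | c \<rho>. 1 \<le> \<rho> \<and> \<rho> \<le> M \<and> dist c h \<le> \<rho>}"

definition LvSet :: "real^'n \<Rightarrow> int \<Rightarrow> real \<Rightarrow> (real^'n) set" where
  "LvSet h i R = (\<lambda>m. \<chi> j. sc i * of_int (m j)) ` Gset (\<lambda>j. h$j / sc i) (R / sc i)"

lemma floor_log_bounds:
  assumes "w > 0"
  shows "2 powr (of_int \<lfloor>log 2 w\<rfloor>) \<le> w" "w < 2 powr (of_int \<lfloor>log 2 w\<rfloor> + 1)"
proof -
  have w: "w = 2 powr (log 2 w)" using assms by simp
  show "2 powr (of_int \<lfloor>log 2 w\<rfloor>) \<le> w"
    by (subst (2) w, rule powr_mono) auto
  show "w < 2 powr (of_int \<lfloor>log 2 w\<rfloor> + 1)"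
    by (subst (1) w, rule powr_less_mono) auto
qed

lemma LvSet_card:
  assumes "R > 0"
  shows "card (LvSet h i R) \<le> card (Gset (\<lambda>j. h$j / sc i) (R / sc i))"
  unfolding LvSet_def by (rule card_image_le) (use assms sc_pos in \<open>auto intro!: Gset_finite\<close>)

lemma LvSet_finite:
  assumes "R > 0" shows "finite (LvSet h i R)"
  unfolding LvSet_def using assms sc_pos by (auto intro!: Gset_finite)

lemma in_LvSet:
  fixes c h p :: "real^'n"
  assumes pn: "\<And>j. (\<exists>n::int. p $ j = sc i * of_int n) \<and> \<bar>c$j - p$j\<bar> \<le> sc i / 2"
    and dch: "dist c h < R"
  shows "p \<in> LvSet h i R"
proof -
  let ?s = "sc i"
  have s0: "?s > 0" by (rule sc_pos)
  obtain m where m: "\<And>j. p $ j = ?s * of_int (m j)"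
    using pn by metis
  have pm: "p = (\<chi> j. ?s * of_int (m j))" using m by (simp add: vec_eq_iff)
  have dlb: "dl (h$j / ?s) (m j) \<le> \<bar>c$j - h$j\<bar> / ?s" for j
  proof -
    have "\<bar>real_of_int (m j) - h$j / ?s\<bar> = \<bar>p$j - h$j\<bar> / ?s"
      using m[of j] s0 by (simp add: field_simps abs_divide)
    also have "\<dots> \<le> (\<bar>p$j - c$j\<bar> + \<bar>c$j - h$j\<bar>) / ?s"
      using s0 by (intro divide_right_mono) auto
    also have "\<dots> \<le> 1/2 + \<bar>c$j - h$j\<bar> / ?s"
      using pn[of j] s0 by (simp add: add_divide_distrib abs_minus_commute)
    finally show ?thesis unfolding dl_def using s0 by (auto simp: divide_nonneg_pos)
  qed
  have "(\<Sum>j\<in>UNIV. (dl (h$j / ?s) (m j))^2) \<le> (\<Sum>j\<in>UNIV. (\<bar>c$j - h$j\<bar> / ?s)^2)"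
    by (rule sum_mono, rule power_mono[OF dlb]) (simp add: dl_def)
  also have "\<dots> = (\<Sum>j\<in>UNIV. ((c - h)$j)^2) / ?s^2"
    by (simp add: power_divide sum_divide_distrib)
  also have "\<dots> = (dist c h)^2 / ?s^2" by (simp add: dist_norm norm_sq_vec)
  also have "\<dots> < R^2 / ?s^2"
    using dch s0 by (intro divide_strict_right_mono power_strict_mono) auto
  also have "\<dots> = (R / ?s)^2" by (simp add: power_divide)
  finally have "m \<in> Gset (\<lambda>j. h$j / ?s) (R / ?s)" unfolding Gset_def by simp
  then show ?thesis unfolding LvSet_def pm by blast
qed


lemma reach_sub:
  fixes h :: "real^'n"
  assumes M1: "M > 1"
  shows "reach M h \<subseteq> (\<Union>i\<in>{\<lfloor>log 2 (1/sqrt (real CARD('n)))\<rfloor>..\<lfloor>log 2 (M/sqrt (real CARD('n)))\<rfloor>}.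
            LvSet h i (min (sqrt (real CARD('n)) * sc i) (2 powr (of_int \<lfloor>log 2 M\<rfloor> + 1))))"
proof
  let ?d = "real CARD('n)"
  have sd0: "sqrt ?d > 0" by simp
  fix p assume "p \<in> reach M h"
  then obtain c \<rho> where p: "p = anc_point c (\<rho> / sqrt ?d)" and r1: "1 \<le> \<rho>" and rM: "\<rho> \<le> M"
    and dch: "dist c h \<le> \<rho>"
    unfolding reach_def by blast
  define w where "w = \<rho> / sqrt ?d"
  have w0: "w > 0" using r1 sd0 unfolding w_def by simp
  define i where "i = \<lfloor>log 2 w\<rfloor>"
  have i0: "\<lfloor>log 2 (1/sqrt ?d)\<rfloor> \<le> i" unfolding i_def w_def
    using r1 sd0 by (intro floor_mono log_mono) (auto simp: divide_right_mono)
  have i1: "i \<le> \<lfloor>log 2 (M/sqrt ?d)\<rfloor>" unfolding i_def w_def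
    using r1 rM sd0 by (intro floor_mono log_mono) (auto simp: divide_right_mono)
  have wlt: "w < sc i" using floor_log_bounds(2)[OF w0] unfolding sc_def i_def .
  have r_lt1: "\<rho> < sqrt ?d * sc i" using wlt sd0 unfolding w_def by (simp add: divide_less_eq mult.commute)
  have r_lt2: "\<rho> < 2 powr (of_int \<lfloor>log 2 M\<rfloor> + 1)"
    using rM floor_log_bounds(2)[of M] M1 by simp
  have pn: "(\<exists>n::int. p $ j = sc i * of_int n) \<and> \<bar>c$j - p$j\<bar> \<le> sc i / 2" for j
    using anc_point_nth[of c w j] unfolding p w_def[symmetric] sc_def i_def by simp
  have pL: "p \<in> LvSet h i (min (sqrt ?d * sc i) (2 powr (of_int \<lfloor>log 2 M\<rfloor> + 1)))"
    by (rule in_LvSet[OF pn]) (use dch r_lt1 r_lt2 in auto)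
  show "p \<in> (\<Union>i\<in>{\<lfloor>log 2 (1/sqrt ?d)\<rfloor>..\<lfloor>log 2 (M/sqrt ?d)\<rfloor>}.
            LvSet h i (min (sqrt ?d * sc i) (2 powr (of_int \<lfloor>log 2 M\<rfloor> + 1))))"
  proof (rule UN_I)
    show "i \<in> {\<lfloor>log 2 (1/sqrt ?d)\<rfloor>..\<lfloor>log 2 (M/sqrt ?d)\<rfloor>}" using i0 i1 by simp
    show "p \<in> LvSet h i (min (sqrt ?d * sc i) (2 powr (of_int \<lfloor>log 2 M\<rfloor> + 1)))" by (rule pL)
  qed
qed

lemma two_powr_int_cases:
  fixes e :: int
  shows "(e \<ge> 1 \<and> 2 powr e \<ge> (2::real)) \<or> (e = 0 \<and> 2 powr e = (1::real)) \<or> (e = -1 \<and> 2 powr e = (1/2::real))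
         \<or> (e \<le> -2 \<and> 2 powr e \<le> (1/4::real))"
proof -
  consider "e \<ge> 1" | "e = 0" | "e = -1" | "e \<le> -2" by linarith
  then show ?thesis
  proof cases
    case 1
    then have "2 powr (1::real) \<le> 2 powr (real_of_int e)" by (intro powr_mono) auto
    then show ?thesis using 1 by simp
  next
    case 2 then show ?thesis by simp
  next
    case 3 then show ?thesis by (simp add: powr_minus_divide)
  next
    case 4
    then have "2 powr (real_of_int e) \<le> 2 powr (-2::real)" by (intro powr_mono) auto
    also have "(2::real) powr (-2::real) = 1/4" by (simp add: powr_minus_divide)
    finally show ?thesis using 4 by simp
  qed
qed

lemma sc_cases:
  "(sc k \<ge> 2) \<or> (k = -1 \<and> sc k = 1) \<or> (k = -2 \<and> sc k = 1/2) \<or> (sc k \<le> 1/4)"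
proof -
  have "sc k = 2 powr (real_of_int (k + 1))" unfolding sc_def by simp
  then show ?thesis using two_powr_int_cases[of "k+1"] by auto
qed

lemma sc_add: "sc (i + j + 1) = sc i * sc j"
  unfolding sc_def by (simp add: powr_add[symmetric] algebra_simps)

lemma K_ceiling: "nat \<lceil>2 * (x::real) + 1\<rceil> \<le> nat \<lfloor>2 * x + 2\<rfloor>"
proof -
  have "\<lceil>2 * x + 1\<rceil> \<le> \<lfloor>2 * x + 1\<rfloor> + 1" by linarith
  then show ?thesis by linarith
qed

lemma sc_m1: "sc (-1) = 1" unfolding sc_def by simp
lemma sc_0: "sc 0 = 2" unfolding sc_def by simp

lemma special_d2:
  fixes h :: "real^'n" and k :: "'n \<Rightarrow> int"
  assumes d2: "CARD('n) = 2" and hk: "\<And>j. h$j = of_int (k j)" and keven: "\<And>j. even (k j)"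
    and R1: "R1 > 0" "R1 \<le> 3/2" and R2: "R2 > 0" "R2 \<le> 2"
    and FR: "F \<subseteq> LvSet h (-1) R1 \<union> LvSet h 0 R2"
    and temp: "h \<in> F \<Longrightarrow> \<exists>q. (\<forall>j. q$j - h$j \<in> {-1,0,1}) \<and> q \<noteq> h \<and> q \<notin> F"
  shows "card F \<le> 16"
proof -
  define Bs where "Bs = (\<lambda>f. \<chi> j. h$j + f j) ` PiE (UNIV::'n set) (\<lambda>_. {-1,0,1::real})"
  define Ts where "Ts = (\<lambda>f. \<chi> j. h$j + f j) ` PiE (UNIV::'n set) (\<lambda>_. {-2,0,2::real})"
  have inB: "p \<in> Bs" if "\<And>j. p$j - h$j \<in> {-1,0,1}" for p
  proof -
    show ?thesis unfolding Bs_def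
      by (rule image_eqI[where x="\<lambda>j. p$j - h$j"]) (use that in \<open>auto simp: vec_eq_iff PiE_iff\<close>)
  qed
  have inT: "p \<in> Ts" if "\<And>j. p$j - h$j \<in> {-2,0,2}" for p
  proof -
    show ?thesis unfolding Ts_def
      by (rule image_eqI[where x="\<lambda>j. p$j - h$j"]) (use that in \<open>auto simp: vec_eq_iff PiE_iff\<close>)
  qed
  have finB: "finite Bs" unfolding Bs_def by (simp add: finite_PiE)
  have finT: "finite Ts" unfolding Ts_def by (simp add: finite_PiE)
  have cB: "card Bs \<le> 9"
  proof -
    have "card Bs \<le> card (PiE (UNIV::'n set) (\<lambda>_. {-1,0,1::real}))"
      unfolding Bs_def by (rule card_image_le) (simp add: finite_PiE)
    also have "\<dots> = 9" using d2 by (simp add: card_PiE numeral_eq_Suc power2_eq_square)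
    finally show ?thesis .
  qed
  have cT: "card Ts \<le> 9"
  proof -
    have "card Ts \<le> card (PiE (UNIV::'n set) (\<lambda>_. {-2,0,2::real}))"
      unfolding Ts_def by (rule card_image_le) (simp add: finite_PiE)
    also have "\<dots> = 9" using d2 by (simp add: card_PiE numeral_eq_Suc power2_eq_square)
    finally show ?thesis .
  qed
  have hB: "h \<in> Bs" by (rule inB) simp
  have hT: "h \<in> Ts" by (rule inT) simp
  have L1: "LvSet h (-1) R1 \<subseteq> Bs"
  proof
    fix p assume "p \<in> LvSet h (-1) R1"
    then obtain m where m: "m \<in> Gset (\<lambda>j. h$j / sc (-1)) (R1 / sc (-1))"
      and p: "p = (\<chi> j. sc (-1) * of_int (m j))"
      unfolding LvSet_def by blast
    have m': "m \<in> Gset (\<lambda>j. real_of_int (k j)) R1" using m hk by (simp add: sc_m1)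
    have mw: "m \<in> PiE UNIV (\<lambda>j. win (real_of_int (k j)) (R1 + 1/2))"
      using Gset_sub_box[OF R1(1), of "\<lambda>j. real_of_int (k j)"] m' by blast
    have "m j \<in> {k j - 1..k j + 1}" for j
      using mw win_aligned2[of "R1 + 1/2" "k j"] R1 by (auto simp: PiE_iff)
    then have mk: "m j - k j = -1 \<or> m j - k j = 0 \<or> m j - k j = 1" for j
    proof -
      assume a: "\<And>j. m j \<in> {k j - 1..k j + 1}"
      have "k j - 1 \<le> m j \<and> m j \<le> k j + 1" using a[of j] by auto
      then show ?thesis by presburger
    qed
    have "p$j - h$j \<in> {-1,0,1}" for j
    proof -
      have "p$j - h$j = real_of_int (m j - k j)" using p hk[of j] by (simp add: sc_m1)
      then show ?thesis using mk[of j] by auto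
    qed
    then show "p \<in> Bs" by (rule inB)
  qed
  have L2: "LvSet h 0 R2 \<subseteq> Ts"
  proof
    fix p assume "p \<in> LvSet h 0 R2"
    then obtain m where m: "m \<in> Gset (\<lambda>j. h$j / sc 0) (R2 / sc 0)"
      and p: "p = (\<chi> j. sc 0 * of_int (m j))"
      unfolding LvSet_def by blast
    have th: "h$j / sc 0 = real_of_int (k j div 2)" for j
      using hk[of j] keven[of j] by (auto simp: sc_0 elim!: evenE)
    have m': "m \<in> Gset (\<lambda>j. real_of_int (k j div 2)) (R2 / 2)" using m th by (simp add: sc_0)
    have mw: "m \<in> PiE UNIV (\<lambda>j. win (real_of_int (k j div 2)) (R2/2 + 1/2))"
      using Gset_sub_box[of "R2/2" "\<lambda>j. real_of_int (k j div 2)"] R2 m' by auto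
    have "m j \<in> {k j div 2 - 1..k j div 2 + 1}" for j
      using mw R2 win_aligned2[of "R2/2 + 1/2" "k j div 2"] by (auto simp: PiE_iff)
    then have mk: "m j - k j div 2 = -1 \<or> m j - k j div 2 = 0 \<or> m j - k j div 2 = 1" for j
    proof -
      assume a: "\<And>j. m j \<in> {k j div 2 - 1..k j div 2 + 1}"
      have "k j div 2 - 1 \<le> m j \<and> m j \<le> k j div 2 + 1" using a[of j] by auto
      then show ?thesis by presburger
    qed
    have "p$j - h$j \<in> {-2,0,2}" for j
    proof -
      have "k j = 2 * (k j div 2)" using keven[of j] by simp
      then have "p$j - h$j = 2 * real_of_int (m j - k j div 2)" using p hk[of j]
        by (simp add: sc_0)
      then show ?thesis using mk[of j] by auto
    qed
    then show "p \<in> Ts" by (rule inT)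
  qed
  have FBT: "F \<subseteq> Bs \<union> Ts" using FR L1 L2 by blast
  have cU: "card (Bs \<union> Ts) \<le> 17"
  proof -
    have "card Bs + card Ts = card (Bs \<union> Ts) + card (Bs \<inter> Ts)"
      by (rule card_Un_Int[OF finB finT])
    moreover have "card (Bs \<inter> Ts) \<ge> 1" using hB hT finB
      by (metis IntI One_nat_def Suc_leI card_gt_0_iff empty_iff finite_Int)
    ultimately show ?thesis using cB cT by linarith
  qed
  show ?thesis
  proof (cases "h \<in> F")
    case True
    then obtain q where q: "\<And>j. q$j - h$j \<in> {-1,0,1}" "q \<noteq> h" "q \<notin> F" using temp by blast
    have qB: "q \<in> Bs \<union> Ts" using inB[OF q(1)] by blast
    have "F \<subseteq> (Bs \<union> Ts) - {q}" using FBT q(3) by blast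
    then have "card F \<le> card ((Bs \<union> Ts) - {q})" by (intro card_mono) (use finB finT in auto)
    also have "\<dots> = card (Bs \<union> Ts) - 1" using qB by (simp add: card_Diff_singleton)
    finally show ?thesis using cU by linarith
  next
    case False
    have "F \<subseteq> (Bs \<union> Ts) - {h}" using FBT False by blast
    then have "card F \<le> card ((Bs \<union> Ts) - {h})" by (intro card_mono) (use finB finT in auto)
    also have "\<dots> = card (Bs \<union> Ts) - 1" using hB by (simp add: card_Diff_singleton)
    finally show ?thesis using cU by linarith
  qed
qed

lemma num_d8: assumes "d \<ge> 8" shows "2 * (641/100::real)^d \<le> 7^d"
proof -
  have "2 * (641/100::real)^8 \<le> 7^8" by (simp add: power_divide)
  moreover have "(641/100::real)^(d-8) \<le> 7^(d-8)" by (rule power_mono) auto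
  ultimately have "2 * (641/100::real)^8 * (641/100)^(d-8) \<le> 7^8 * 7^(d-8)"
    by (intro mult_mono) auto
  moreover have "(641/100::real)^8 * (641/100)^(d-8) = (641/100)^d"
    "(7::real)^8 * 7^(d-8) = 7^d"
    using assms by (simp_all only: power_add[symmetric]) simp_all
  ultimately show ?thesis by (simp only: mult.assoc)
qed

lemma sqrt_ge: assumes "a^2 \<le> x" "0 \<le> a" shows "a \<le> sqrt x"
  using assms real_le_rsqrt by blast

lemma sqrt_lt: assumes "x < a^2" "0 \<le> a" "0 \<le> x" shows "sqrt x < a"
  using assms by (metis real_sqrt_less_iff real_sqrt_abs abs_of_nonneg)

lemma K_lower:
  fixes d :: nat
  assumes "real k \<le> 2 * sqrt (real d) + 2"
  shows "real k \<le> real_of_int \<lfloor>2 * sqrt (real d) + 2\<rfloor>"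
  using assms by (metis floor_of_nat le_floor_iff of_int_of_nat_eq of_int_le_iff)

lemma sq_le_sqrt: assumes "0 \<le> T" "T \<le> sqrt x" "0 \<le> x" shows "T^2 \<le> (x::real)"
proof -
  have "T^2 \<le> (sqrt x)^2" using assms by (intro power_mono) auto
  then show ?thesis using assms by simp
qed

lemma lo_bound: assumes "0 < sb" "sd < a" "1 < sd * sb" shows "1 < a * (sb::real)"
proof -
  have "sd * sb < a * sb" using assms by (intro mult_strict_right_mono) auto
  then show ?thesis using assms by linarith
qed

lemma hi_bound: assumes "0 < sb" "b \<le> sd" "sd * sb < 2" shows "b * sb < (2::real)"
proof -
  have "b * sb \<le> sd * sb" using assms by (intro mult_right_mono) auto
  then show ?thesis using assms by linarith
qed

lemma two_level_bound:
  fixes hk :: "'n::finite \<Rightarrow> int" and \<theta>t :: "'n \<Rightarrow> real"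
  assumes d2: "CARD('n) \<noteq> 2" and sb: "sb = sc i0"
    and lo: "1 < sqrt (real CARD('n)) * sb" and hi: "sqrt (real CARD('n)) * sb < 2"
    and Tb: "0 < Tb" "Tb \<le> sqrt (real CARD('n))" and Tt: "0 < Tt" "Tt \<le> 1/sb"
  shows "real (card (Gset (\<lambda>j. real_of_int (hk j) / sb) Tb)) + real (card (Gset \<theta>t Tt))
         \<le> (real_of_int \<lfloor>2 * sqrt (real CARD('n)) + 2\<rfloor>) ^ CARD('n)"
proof -
  let ?d = "CARD('n)"
  let ?sd = "sqrt (real ?d)"
  let ?K = "real_of_int \<lfloor>2 * ?sd + 2\<rfloor>"
  let ?cb = "real (card (Gset (\<lambda>j. real_of_int (hk j) / sb) Tb))"
  let ?ct = "real (card (Gset \<theta>t Tt))"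
  have sb0: "sb > 0" using sb sc_pos by simp
  have dge1: "?d \<ge> 1" by (simp add: Suc_leI)
  consider (d1) "?d = 1" | (d3) "?d = 3" | (d4) "?d = 4" | (d5) "?d = 5 \<or> ?d = 6" | (d7) "?d = 7" | (d8) "?d \<ge> 8"
    using dge1 d2 by linarith
  then show ?thesis
  proof cases
    case d1
    then have "1 < sb" "sb < 2" using lo hi by auto
    then show ?thesis using sc_cases[of i0] sb by auto
  next
    case d3
    have e3: "?sd = sqrt 3" using d3 by simp
    have "3/2 \<le> sqrt (3::real)" by (rule sqrt_ge) (auto simp: power2_eq_square)
    moreover have "sqrt (3::real) < 2" by (rule sqrt_lt) (auto simp: power2_eq_square)
    ultimately have s3: "3/2 \<le> ?sd" "?sd < 2" using e3 by auto
    have sb1: "sb = 1"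
    proof -
      have "1 < 2 * sb" by (rule lo_bound[OF sb0 _ lo]) (use s3 in auto)
      moreover have "1 * sb < 2" by (rule hi_bound[OF sb0 _ hi]) (use s3 in auto)
      ultimately have "sb > 1/2" "sb < 2" by auto
      then show ?thesis using sc_cases[of i0] sb by auto
    qed
    have "?cb \<le> 81"
    proof -
      have "Tb^2 \<le> 3" using Tb d3 by (metis of_nat_numeral power_mono real_sqrt_pow2 less_imp_le of_nat_0_le_iff)
      then have "card (Gset (\<lambda>j. real_of_int (hk j)) Tb) \<le> 81" using Gset_d3[OF d3 Tb(1)] by blast
      then show ?thesis using sb1 by simp
    qed
    moreover have "?ct \<le> 27"
    proof -
      have "card (Gset \<theta>t Tt) \<le> (nat \<lceil>2*(1::real) + 1\<rceil>) ^ ?d" by (rule Gset_box_T) (use Tt sb1 in auto)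
      then show ?thesis using d3 by simp
    qed
    moreover have "125 \<le> ?K ^ ?d"
    proof -
      have "real 5 \<le> ?K" by (rule K_lower) (use s3 in auto)
      then have "5^3 \<le> ?K^3" by (intro power_mono) auto
      then show ?thesis using d3 by simp
    qed
    ultimately show ?thesis by linarith
  next
    case d4
    have "?sd = 2" using d4 by simp
    then have "1/2 < sb" "sb < 1" using lo hi by auto
    then show ?thesis using sc_cases[of i0] sb by auto
  next
    case d5
    have r56: "5 \<le> real ?d" "real ?d \<le> 6" using d5 by auto
    have q1: "sqrt 5 \<le> ?sd" using r56 by simp
    have q2: "?sd \<le> sqrt 6" using r56 by simp
    have q3: "2 < sqrt (5::real)" by (rule real_less_rsqrt) (auto simp: power2_eq_square)
    have q4: "sqrt (6::real) < 5/2" by (rule sqrt_lt) (auto simp: power2_eq_square)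
    have s5: "2 < ?sd" "?sd \<le> 5/2" using q1 q2 q3 q4 by linarith+
    have sb1: "sb = 1/2"
    proof -
      have "1 < 3 * sb" by (rule lo_bound[OF sb0 _ lo]) (use s5 in auto)
      moreover have "2 * sb < 2" by (rule hi_bound[OF sb0 _ hi]) (use s5 in auto)
      ultimately have "sb > 1/4" "sb < 1" by auto
      then show ?thesis using sc_cases[of i0] sb by auto
    qed
    have "?cb \<le> 5 ^ ?d"
    proof -
      have eq: "(\<lambda>j. real_of_int (hk j) / sb) = (\<lambda>j. real_of_int (2 * hk j))" unfolding sb1 by (simp add: mult.commute)
      have "card (Gset (\<lambda>j. real_of_int (2 * hk j)) Tb) \<le> 5 ^ ?d"
        by (rule Gset_box_aligned5) (use Tb s5 in auto)
      then have "real (card (Gset (\<lambda>j. real_of_int (2 * hk j)) Tb)) \<le> real (5 ^ ?d)" by (rule of_nat_mono)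
      then show ?thesis unfolding eq by simp
    qed
    moreover have "?ct \<le> 5 ^ ?d"
    proof -
      have "card (Gset \<theta>t Tt) \<le> (nat \<lceil>2*(2::real) + 1\<rceil>) ^ ?d" by (rule Gset_box_T) (use Tt sb1 in auto)
      then have "card (Gset \<theta>t Tt) \<le> 5 ^ ?d" by simp
      then have "real (card (Gset \<theta>t Tt)) \<le> real (5 ^ ?d)" by (rule of_nat_mono)
      then show ?thesis by simp
    qed
    moreover have "2 * 5 ^ ?d \<le> ?K ^ ?d"
    proof -
      have "real 6 \<le> ?K" by (rule K_lower) (use s5 in auto)
      then have "6 ^ ?d \<le> ?K ^ ?d" by (intro power_mono) auto
      moreover have "2 * 5 ^ ?d \<le> (6::real) ^ ?d" using d5 by auto
      ultimately show ?thesis by linarith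
    qed
    ultimately show ?thesis by linarith
  next
    case d7
    have e7: "?sd = sqrt 7" using d7 by simp
    have "5/2 \<le> sqrt (7::real)" by (rule sqrt_ge) (auto simp: power2_eq_square)
    moreover have "sqrt (7::real) < 3" by (rule sqrt_lt) (auto simp: power2_eq_square)
    ultimately have s7: "5/2 \<le> ?sd" "?sd < 3" using e7 by auto
    have sb1: "sb = 1/2"
    proof -
      have "1 < 3 * sb" by (rule lo_bound[OF sb0 _ lo]) (use s7 in auto)
      moreover have "(5/2) * sb < 2" by (rule hi_bound[OF sb0 _ hi]) (use s7 in auto)
      ultimately have "sb > 1/4" "sb < 1" by auto
      then show ?thesis using sc_cases[of i0] sb by auto
    qed
    have "?cb \<le> (641/100) ^ ?d"
      by (rule chernoff) (use Tb in \<open>auto intro: sq_le_sqrt\<close>)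
    moreover have "?ct \<le> 5 ^ ?d"
    proof -
      have "card (Gset \<theta>t Tt) \<le> (nat \<lceil>2*(2::real) + 1\<rceil>) ^ ?d" by (rule Gset_box_T) (use Tt sb1 in auto)
      then have "card (Gset \<theta>t Tt) \<le> 5 ^ ?d" by simp
      then have "real (card (Gset \<theta>t Tt)) \<le> real (5 ^ ?d)" by (rule of_nat_mono)
      then show ?thesis by simp
    qed
    moreover have "(641/100) ^ ?d + 5 ^ ?d \<le> ?K ^ ?d"
    proof -
      have "real 7 \<le> ?K" by (rule K_lower) (use s7 in auto)
      then have "7 ^ ?d \<le> ?K ^ ?d" by (intro power_mono) auto
      moreover have "(641/100) ^ ?d + 5 ^ ?d \<le> (7::real) ^ ?d" using d7 by (simp add: power_divide)
      ultimately show ?thesis by linarith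
    qed
    ultimately show ?thesis by linarith
  next
    case d8
    have "(5/2::real)^2 \<le> real ?d" using d8 by (simp add: power2_eq_square)
    then have s8: "5/2 \<le> ?sd" by (rule sqrt_ge) simp
    have "?cb \<le> (641/100) ^ ?d"
      by (rule chernoff) (use Tb in \<open>auto intro: sq_le_sqrt\<close>)
    moreover have "?ct \<le> (641/100) ^ ?d"
    proof (rule chernoff)
      show "0 < Tt" by (rule Tt)
      have "Tt \<le> ?sd"
      proof -
        have "1/sb < ?sd" using lo sb0 by (simp add: divide_less_eq mult.commute)
        then show ?thesis using Tt by simp
      qed
      then show "Tt^2 \<le> real ?d" using Tt by (auto intro: sq_le_sqrt)
    qed
    moreover have "2 * (641/100) ^ ?d \<le> ?K ^ ?d"
    proof -
      have "real 7 \<le> ?K" by (rule K_lower) (use s8 in auto)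
      then have "7 ^ ?d \<le> ?K ^ ?d" by (intro power_mono) auto
      moreover have "2 * (641/100) ^ ?d \<le> (7::real) ^ ?d" using num_d8 d8 by blast
      ultimately show ?thesis by linarith
    qed
    ultimately show ?thesis by linarith
  qed
qed

lemma sum_int_split:
  fixes f :: "int \<Rightarrow> real"
  assumes "a < b"
  shows "(\<Sum>i\<in>{a..b}. f i) = f a + f b + (\<Sum>i\<in>{a+1..b-1}. f i)"
proof -
  have "{a..b} = insert a (insert b {a+1..b-1})" using assms by auto
  then show ?thesis using assms by simp
qed

lemma sum_int_le_const:
  fixes f :: "int \<Rightarrow> real"
  assumes "\<And>i. i \<in> {a..b} \<Longrightarrow> f i \<le> B" "a \<le> b + 1"
  shows "(\<Sum>i\<in>{a..b}. f i) \<le> (of_int (b - a + 1)) * B"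
proof -
  have "(\<Sum>i\<in>{a..b}. f i) \<le> (\<Sum>i\<in>{a..b}. B)" by (rule sum_mono) (use assms in auto)
  also have "\<dots> = real (card {a..b}) * B" by simp
  also have "real (card {a..b}) = of_int (b - a + 1)" using assms by simp
  finally show ?thesis .
qed

lemma floor_add_le1: "\<lfloor>x + y\<rfloor> \<le> \<lfloor>x\<rfloor> + \<lfloor>y::real\<rfloor> + 1"
proof -
  have "real_of_int \<lfloor>x + y\<rfloor> \<le> x + y" "x < real_of_int \<lfloor>x\<rfloor> + 1" "y < real_of_int \<lfloor>y\<rfloor> + 1"
    by linarith+
  then have "real_of_int \<lfloor>x + y\<rfloor> < real_of_int (\<lfloor>x\<rfloor> + \<lfloor>y\<rfloor> + 2)" by (simp only: of_int_add of_int_numeral)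
  then show ?thesis by linarith
qed

lemma int_lattice_ints:
  assumes "h \<in> int_lattice"
  obtains hk where "\<And>j. h$j = real_of_int (hk j)"
proof -
  have "\<forall>j. \<exists>k. h$j = real_of_int k" using assms unfolding int_lattice_def by (auto elim!: Ints_cases)
  then obtain hk where "\<forall>j. h$j = real_of_int (hk j)" by metis
  then show ?thesis using that by blast
qed

lemma reach_bound:
  fixes h :: "real^'n" and F :: "(real^'n) set" and M :: real
  assumes M1: "M > 1" and hZ: "h \<in> int_lattice" and finF: "finite F" and FR: "F \<subseteq> reach M h"
    and temp: "CARD('n) = 2 \<Longrightarrow> h \<in> F \<Longrightarrow> \<exists>q. (\<forall>j. q$j - h$j \<in> {-1,0,1}) \<and> q \<noteq> h \<and> q \<notin> F"
  shows "real (card F) \<le> (real_of_int \<lfloor>2 * sqrt (real CARD('n)) + 2\<rfloor>) ^ CARD('n) * (real_of_int \<lfloor>log 2 M\<rfloor> + 1)"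
proof -
  let ?d = "CARD('n)"
  define sd where "sd = sqrt (real ?d)"
  define K where "K = real_of_int \<lfloor>2 * sd + 2\<rfloor>"
  define L where "L = \<lfloor>log 2 M\<rfloor>"
  define i0 where "i0 = \<lfloor>log 2 (1/sd)\<rfloor>"
  define i1 where "i1 = \<lfloor>log 2 (M/sd)\<rfloor>"
  define Rf where "Rf i = min (sd * sc i) (2 powr (of_int L + 1))" for i
  define T where "T i = Rf i / sc i" for i
  define c where "c i = real (card (LvSet h i (Rf i)))" for i
  define KB where "KB = K ^ ?d"
  have d1: "real ?d \<ge> 1" by simp
  have sd1: "sd \<ge> 1" unfolding sd_def using d1 by simp
  have sd0: "sd > 0" using sd1 by simp
  have K4: "K \<ge> 4"
  proof -
    have "real 4 \<le> real_of_int \<lfloor>2 * sqrt (real ?d) + 2\<rfloor>" by (rule K_lower) (use sd1 sd_def in simp)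
    then show ?thesis unfolding K_def sd_def by simp
  qed
  have KB0: "KB \<ge> 0" unfolding KB_def using K4 by simp
  have Rf0: "Rf i > 0" for i unfolding Rf_def using sd0 sc_pos by simp
  have T0: "T i > 0" for i unfolding T_def using Rf0 sc_pos by simp
  have Tsd: "T i \<le> sd" for i
  proof -
    have "Rf i \<le> sd * sc i" unfolding Rf_def by simp
    then show ?thesis unfolding T_def using sc_pos[of i] by (simp add: divide_le_eq)
  qed
  obtain hk where hk: "\<And>j. h$j = real_of_int (hk j)" using int_lattice_ints[OF hZ] by blast
  have cG: "c i \<le> real (card (Gset (\<lambda>j. h$j / sc i) (T i)))" for i
    unfolding c_def T_def using LvSet_card[OF Rf0[of i], of h] by simp
  have cbox: "c i \<le> KB" for i
  proof -
    have "card (Gset (\<lambda>j. h$j / sc i) (T i)) \<le> (nat \<lceil>2 * sd + 1\<rceil>) ^ ?d"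
      by (rule Gset_box_T[OF T0 Tsd])
    also have "\<dots> \<le> (nat \<lfloor>2 * sd + 2\<rfloor>) ^ ?d" by (intro power_mono K_ceiling) simp
    finally have "real (card (Gset (\<lambda>j. h$j / sc i) (T i))) \<le> real ((nat \<lfloor>2 * sd + 2\<rfloor>) ^ ?d)"
      by (rule of_nat_mono)
    also have "\<dots> = KB" unfolding KB_def K_def using K4 unfolding K_def by simp
    finally show ?thesis using cG[of i] by linarith
  qed
  have L0: "L \<ge> 0" unfolding L_def using M1 by simp
  have rs: "reach M h \<subseteq> (\<Union>i\<in>{i0..i1}. LvSet h i (Rf i))"
    using reach_sub[OF M1, of h] unfolding i0_def i1_def Rf_def sd_def L_def by simp
  have finR: "finite (reach M h)"
    by (rule finite_subset[OF rs]) (use LvSet_finite Rf0 in auto)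
  have cR: "real (card (reach M h)) \<le> (\<Sum>i\<in>{i0..i1}. c i)"
  proof -
    have "card (reach M h) \<le> card (\<Union>i\<in>{i0..i1}. LvSet h i (Rf i))"
      by (rule card_mono[OF _ rs]) (use LvSet_finite Rf0 in auto)
    also have "\<dots> \<le> (\<Sum>i\<in>{i0..i1}. card (LvSet h i (Rf i)))" by (rule card_UN_le) simp
    finally show ?thesis unfolding c_def by (metis of_nat_le_iff of_nat_sum)
  qed
  have cF: "real (card F) \<le> real (card (reach M h))" using card_mono[OF finR FR] by simp
  have i01: "i0 \<le> i1" unfolding i0_def i1_def using M1 sd0
    by (intro floor_mono log_mono) (auto simp: divide_right_mono)
  have i1L: "i1 \<le> i0 + L + 1"
  proof -
    have "log 2 (M/sd) = log 2 M + log 2 (1/sd)"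
      using M1 sd0 by (simp add: log_divide_pos log_recip)
    then show ?thesis unfolding i1_def i0_def L_def using floor_add_le1[of "log 2 M" "log 2 (1/sd)"]
      by simp
  qed
  have goal: "real (card F) \<le> KB * (of_int L + 1)"
  proof (cases "i1 \<le> i0 + L")
    case True
    have "(\<Sum>i\<in>{i0..i1}. c i) \<le> of_int (i1 - i0 + 1) * KB"
      by (rule sum_int_le_const) (use cbox i01 in auto)
    also have "\<dots> \<le> (of_int L + 1) * KB"
      using True KB0 by (intro mult_right_mono) auto
    finally show ?thesis using cF cR by (simp add: mult.commute)
  next
    case False
    then have i1e: "i1 = i0 + L + 1" using i1L by simp
    define sb where "sb = sc i0"
    have sb0: "sb > 0" unfolding sb_def by (rule sc_pos)
    have lo: "1 < sd * sb"
    proof -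
      have "1/sd < sc i0" unfolding sc_def i0_def using floor_log_bounds(2)[of "1/sd"] sd0 by simp
      then show ?thesis unfolding sb_def using sd0 by (simp add: divide_less_eq mult.commute)
    qed
    have scL: "M < sc L" unfolding sc_def L_def using floor_log_bounds(2)[of M] M1 by simp
    have sc_split: "sc i1 = sb * sc L" unfolding i1e sb_def by (rule sc_add)
    have hi: "sd * sb < 2"
    proof -
      have "2 powr (of_int i1) \<le> M/sd" unfolding i1_def using floor_log_bounds(1)[of "M/sd"] M1 sd0 by simp
      moreover have "sc i1 = 2 * 2 powr (of_int i1)" unfolding sc_def by (simp add: powr_add)
      ultimately have "sc i1 \<le> 2 * M / sd" by simp
      then have "sd * sc i1 \<le> 2 * M" using sd0 by (simp add: le_divide_eq mult.commute)
      also have "\<dots> < 2 * sc L" using scL by simp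
      finally have "(sd * sb) * sc L < 2 * sc L" unfolding sc_split by (simp add: mult.assoc)
      then show ?thesis using sc_pos[of L] by simp
    qed
    have topT: "T i1 \<le> 1/sb"
    proof -
      have "Rf i1 \<le> sc L" unfolding Rf_def sc_def by simp
      then have "T i1 \<le> sc L / sc i1" unfolding T_def using sc_pos[of i1] by (simp add: divide_right_mono)
      also have "\<dots> = 1/sb" unfolding sc_split using sc_pos[of L] sb0 by simp
      finally show ?thesis .
    qed
    have i0i1: "i0 < i1" using i1e L0 by simp
    have split: "(\<Sum>i\<in>{i0..i1}. c i) = c i0 + c i1 + (\<Sum>i\<in>{i0+1..i1-1}. c i)"
      by (rule sum_int_split[OF i0i1])
    have mid: "(\<Sum>i\<in>{i0+1..i1-1}. c i) \<le> of_int L * KB"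
    proof -
      have "(\<Sum>i\<in>{i0+1..i1-1}. c i) \<le> of_int ((i1 - 1) - (i0 + 1) + 1) * KB"
        by (rule sum_int_le_const) (use cbox i1e L0 in auto)
      then show ?thesis using i1e by simp
    qed
    show ?thesis
    proof (cases "?d = 2")
      case False
      have "c i0 + c i1 \<le> KB"
      proof -
        have "real (card (Gset (\<lambda>j. real_of_int (hk j) / sb) (T i0))) + real (card (Gset (\<lambda>j. h$j / sc i1) (T i1)))
             \<le> (real_of_int \<lfloor>2 * sqrt (real ?d) + 2\<rfloor>) ^ ?d"
          by (rule two_level_bound[OF False sb_def]) (use lo hi T0 Tsd topT sd_def in auto)
        moreover have "(\<lambda>j. h$j / sc i0) = (\<lambda>j. real_of_int (hk j) / sb)" using hk sb_def by auto
        ultimately show ?thesis using cG[of i0] cG[of i1] unfolding KB_def K_def sd_def by simp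
      qed
      then show ?thesis using cF cR split mid by (simp add: algebra_simps)
    next
      case True
      have sd2: "sd = sqrt 2" using True sd_def by simp
      have sq2: "sqrt (2::real) < 3/2" by (rule sqrt_lt) (auto simp: power2_eq_square)
      have i0m: "i0 = -1" and sb1: "sb = 1"
      proof -
        have "1 < (3/2) * sb" by (rule lo_bound[OF sb0 _ lo]) (use sd2 sq2 in auto)
        moreover have "1 * sb < 2" by (rule hi_bound[OF sb0 _ hi]) (use sd1 in auto)
        ultimately have "sb > 1/2" "sb < 2" by auto
        then show "i0 = -1" "sb = 1" using sc_cases[of i0] unfolding sb_def by auto
      qed
      have i1L': "i1 = L" using i1e i0m by simp
      have Tsq: "(T i)^2 \<le> 2" for i
        using sq_le_sqrt[of "T i" 2] T0[of i] Tsd[of i] sd2 by simp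
      have Tlt: "T i + 1/2 \<le> 2" for i using Tsd[of i] sd2 sq2 by simp
      have cb: "c (-1) \<le> 9"
      proof -
        have "card (Gset (\<lambda>j. real_of_int (hk j)) (T (-1))) \<le> 3 ^ ?d"
          by (rule Gset_box_aligned3[OF T0 Tlt])
        moreover have "(\<lambda>j. h$j / sc (-1)) = (\<lambda>j. real_of_int (hk j))" using hk by (simp add: sc_m1)
        ultimately show ?thesis using cG[of "-1"] True by (simp add: sc_m1)
      qed
      have ct: "c L \<le> 9"
      proof -
        have "T L \<le> 1" using topT i1L' sb1 by simp
        then have "card (Gset (\<lambda>j. h$j / sc L) (T L)) \<le> (nat \<lceil>2 * (1::real) + 1\<rceil>) ^ ?d"
          by (intro Gset_box_T[OF T0])
        then have "card (Gset (\<lambda>j. h$j / sc L) (T L)) \<le> 9" using True by simp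
        then show ?thesis using cG[of L] by linarith
      qed
      have KB16: "16 \<le> KB"
      proof -
        have "4^2 \<le> K^2" using K4 by (intro power_mono) auto
        then show ?thesis unfolding KB_def using True by simp
      qed
      show ?thesis
      proof (cases "L = 0")
        case False
        then have L1: "L \<ge> 1" using L0 by simp
        have mid2: "(\<Sum>i\<in>{i0+1..i1-1}. c i) \<le> 12 + 15 * (of_int L - 1)"
        proof -
          have e: "{i0+1..i1-1} = insert 0 {1..L-1}" using i0m i1L' L1 by auto
          have c0: "c 0 \<le> 12"
          proof -
            have "card (Gset (\<lambda>j. real_of_int (hk j) / 2) (T 0)) \<le> 12"
              by (rule Gset_d2_half[OF True T0 Tsq])
            moreover have "(\<lambda>j. h$j / sc 0) = (\<lambda>j. real_of_int (hk j) / 2)" using hk by (simp add: sc_0)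
            ultimately show ?thesis using cG[of 0] by (simp add: sc_0)
          qed
          have c15: "c i \<le> 15" for i
          proof -
            have "card (Gset (\<lambda>j. h$j / sc i) (T i)) \<le> 15" by (rule Gset_d2_15[OF True T0 Tsq])
            then show ?thesis using cG[of i] by linarith
          qed
          have "(\<Sum>i\<in>{1..L-1}. c i) \<le> of_int ((L - 1) - 1 + 1) * 15"
            by (rule sum_int_le_const) (use c15 L1 in auto)
          then show ?thesis unfolding e using c0 by (simp add: algebra_simps)
        qed
        have "real (card F) \<le> 9 + 9 + (12 + 15 * (of_int L - 1))"
          using cF cR split mid2 cb ct i0m i1L' by simp
        also have "\<dots> \<le> 16 * (of_int L + 1)" using L1 by simp
        also have "\<dots> \<le> KB * (of_int L + 1)" using KB16 L0 by (intro mult_right_mono) auto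
        finally show ?thesis .
      next
        case L0': True
        have i1z: "i1 = 0" using i1L' L0' by simp
        have sum2: "(\<Sum>i\<in>{i0..i1}. c i) = c (-1) + c 0"
        proof -
          have "{i0..i1} = {-1, 0}" using i0m i1z by auto
          then show ?thesis by simp
        qed
        show ?thesis
        proof (cases "\<exists>j0. odd (hk j0)")
          case True
          then obtain j0 where j0: "odd (hk j0)" by blast
          have c0: "c 0 \<le> 6"
          proof -
            have th: "real_of_int (hk j0) / 2 = real_of_int (hk j0 div 2) + 1/2"
              using j0 by (auto elim!: oddE)
            have "T 0 \<le> 1" using topT i1z sb1 by simp
            then have "card (Gset (\<lambda>j. real_of_int (hk j) / 2) (T 0)) \<le> 2 * 3 ^ (?d - 1)"
              by (rule Gset_top_half[OF T0, where jz=j0 and kz="hk j0 div 2"]) (use th in auto)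
            moreover have "(\<lambda>j. h$j / sc 0) = (\<lambda>j. real_of_int (hk j) / 2)" using hk by (simp add: sc_0)
            ultimately show ?thesis using cG[of 0] \<open>?d = 2\<close> by (simp add: sc_0)
          qed
          have "real (card F) \<le> 9 + 6" using cF cR sum2 cb c0 by simp
          also have "\<dots> \<le> KB * (of_int L + 1)" using KB16 L0' by simp
          finally show ?thesis .
        next
          case False
          then have ev: "\<And>j. even (hk j)" by blast
          have FR2: "F \<subseteq> LvSet h (-1) (Rf (-1)) \<union> LvSet h 0 (Rf 0)"
          proof -
            have "{i0..i1} = {-1, 0}" using i0m i1z by auto
            then show ?thesis using FR rs by auto
          qed
          have R1: "Rf (-1) \<le> 3/2"
          proof -
            have "Rf (-1) \<le> sd * sc (-1)" unfolding Rf_def by simp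
            then show ?thesis using sd2 sq2 by (simp add: sc_m1)
          qed
          have R2: "Rf 0 \<le> 2" unfolding Rf_def using L0' by simp
          have "card F \<le> 16"
            by (rule special_d2[OF \<open>?d = 2\<close> hk ev Rf0 R1 Rf0 R2 FR2 temp[OF \<open>?d = 2\<close>]])
          then have "real (card F) \<le> 16" by simp
          also have "\<dots> \<le> KB * (of_int L + 1)" using KB16 L0' by simp
          finally show ?thesis .
        qed
      qed
    qed
  qed
  then show ?thesis unfolding KB_def K_def sd_def L_def by simp
qed

lemma sq_round_le: fixes x e :: real
  assumes "e = 0 \<or> (e = 1 \<and> x \<ge> 1/2) \<or> (e = -1 \<and> x \<le> -1/2)"
  shows "(x - e)^2 \<le> x^2"
  using assms by (auto simp: power2_eq_square algebra_simps)

lemma cover2: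
  fixes c h :: "real^'n"
  assumes d2: "CARD('n) = 2" and dch: "dist c h \<le> \<rho>" and r1: "1 \<le> \<rho>"
  shows "\<exists>q. (\<forall>j. q$j - h$j \<in> {-1,0,1}) \<and> q \<noteq> h \<and> dist c q \<le> \<rho>"
proof -
  obtain j1 j2 :: 'n where j12: "j1 \<noteq> j2" "UNIV = {j1, j2}" using two_univ[OF d2] by blast
  have sum2: "(\<Sum>j\<in>UNIV. f j) = f j1 + f j2" for f :: "'n \<Rightarrow> real"
    by (subst j12(2)) (simp add: j12(1))
  define x where "x j = c$j - h$j" for j
  have dist_e: "(dist c (h + (\<chi> j. e j)))^2 = (x j1 - e j1)^2 + (x j2 - e j2)^2" for e
    unfolding dist_norm norm_sq_vec sum2 x_def by (simp add: algebra_simps)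
  have dch2: "(x j1)^2 + (x j2)^2 \<le> \<rho>^2"
  proof -
    have "(dist c h)^2 = (x j1)^2 + (x j2)^2" unfolding dist_norm norm_sq_vec sum2 x_def by simp
    moreover have "(dist c h)^2 \<le> \<rho>^2" using dch by (intro power_mono) auto
    ultimately show ?thesis by simp
  qed
  have qprops: "\<forall>j. (h + (\<chi> j. e j))$j - h$j \<in> {-1,0,1}" if "\<And>j. e j \<in> {-1,0,1}" for e
    using that by simp
  have qne: "h + (\<chi> j. e j) \<noteq> h" if "e j \<noteq> 0" for e j
    using that by (auto simp: vec_eq_iff)
  have fin: "dist c (h + (\<chi> j. e j)) \<le> \<rho>" if "(dist c (h + (\<chi> j. e j)))^2 \<le> \<rho>^2" for e
    using that r1 by (meson power2_le_imp_le order_trans zero_le_one)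
  show ?thesis
  proof (cases "\<exists>j. \<bar>x j\<bar> \<ge> 1/2")
    case True
    then obtain j0 where j0: "\<bar>x j0\<bar> \<ge> 1/2" by blast
    define e where "e j = (if x j \<ge> 1/2 then 1 else if x j \<le> -1/2 then -1 else (0::real))" for j
    have ee: "e j = 0 \<or> (e j = 1 \<and> x j \<ge> 1/2) \<or> (e j = -1 \<and> x j \<le> -1/2)" for j
      unfolding e_def by auto
    have "(dist c (h + (\<chi> j. e j)))^2 \<le> (x j1)^2 + (x j2)^2"
    proof -
      have "(x j1 - e j1)^2 \<le> (x j1)^2" by (rule sq_round_le[OF ee[of j1]])
      moreover have "(x j2 - e j2)^2 \<le> (x j2)^2" by (rule sq_round_le[OF ee[of j2]])
      ultimately show ?thesis unfolding dist_e by linarith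
    qed
    then have d: "dist c (h + (\<chi> j. e j)) \<le> \<rho>" using dch2 by (intro fin) simp
    have "e j0 \<noteq> 0" using j0 unfolding e_def by auto
    then have "h + (\<chi> j. e j) \<noteq> h" by (rule qne)
    moreover have "\<forall>j. (h + (\<chi> j. e j))$j - h$j \<in> {-1,0,1}" by (rule qprops) (auto simp: e_def)
    ultimately show ?thesis using d by blast
  next
    case False
    then have small: "\<bar>x j\<bar> < 1/2" for j by (meson not_le)
    have key: "\<exists>q. (\<forall>j. q$j - h$j \<in> {-1,0,1}) \<and> q \<noteq> h \<and> dist c q \<le> \<rho>"
      if ab: "\<bar>x b\<bar> \<le> \<bar>x a\<bar>" and ab2: "a \<noteq> b" and U: "UNIV = {a, b}" for a b
    proof -
      have sumab: "(\<Sum>j\<in>UNIV. f j) = f a + f b" for f :: "'n \<Rightarrow> real"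
        by (subst U) (simp add: ab2)
      define e where "e j = (if j = a then (if x a \<ge> 0 then 1 else -1) else (0::real))" for j
      have "(dist c (h + (\<chi> j. e j)))^2 = (x a - e a)^2 + (x b - e b)^2"
        unfolding dist_norm norm_sq_vec sumab x_def by (simp add: algebra_simps)
      also have "\<dots> = (1 - \<bar>x a\<bar>)^2 + (x b)^2"
      proof -
        have "e b = 0" using ab2 unfolding e_def by simp
        moreover have "(x a - e a)^2 = (1 - \<bar>x a\<bar>)^2"
        proof (cases "x a \<ge> 0")
          case True
          then have "e a = 1" "\<bar>x a\<bar> = x a" unfolding e_def by auto
          then show ?thesis by (simp add: power2_commute)
        next
          case False
          then have "e a = -1" "\<bar>x a\<bar> = - x a" unfolding e_def by auto
          then show ?thesis by (simp add: power2_eq_square algebra_simps)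
        qed
        ultimately show ?thesis by simp
      qed
      also have "\<dots> \<le> (1 - \<bar>x a\<bar>)^2 + (\<bar>x a\<bar>)^2"
      proof -
        have "\<bar>x b\<bar>^2 \<le> \<bar>x a\<bar>^2" by (rule power_mono[OF ab]) simp
        then show ?thesis by simp
      qed
      also have "\<dots> \<le> 1"
      proof -
        define t where "t = \<bar>x a\<bar>"
        have t: "0 \<le> t" "t \<le> 1" using small[of a] unfolding t_def by auto
        have "0 \<le> t * (1 - t)" using t by simp
        moreover have "(1 - t)^2 + t^2 = 1 - 2 * (t * (1 - t))" by (simp add: power2_eq_square algebra_simps)
        ultimately show ?thesis unfolding t_def[symmetric] by linarith
      qed
      also have "\<dots> \<le> \<rho>^2" using r1 by (simp add: one_le_power)
      finally have d: "dist c (h + (\<chi> j. e j)) \<le> \<rho>" by (rule fin)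
      have "e a \<noteq> 0" unfolding e_def by auto
      then have "h + (\<chi> j. e j) \<noteq> h" by (rule qne)
      moreover have "\<forall>j. (h + (\<chi> j. e j))$j - h$j \<in> {-1,0,1}" by (rule qprops) (auto simp: e_def)
      ultimately show ?thesis using d by blast
    qed
    show ?thesis
    proof (cases "\<bar>x j2\<bar> \<le> \<bar>x j1\<bar>")
      case True then show ?thesis using key[of j2 j1] j12 by auto
    next
      case False then show ?thesis using key[of j1 j2] j12 by (auto simp: insert_commute)
    qed
  qed
qed

definition Inv :: "real \<Rightarrow> (real^'n) set \<Rightarrow> (real^'n) set \<Rightarrow> bool" where
  "Inv M H S \<longleftrightarrow> finite S \<and> (\<exists>g. (\<forall>p\<in>S. g p \<in> H \<and> p \<in> reach M (g p)) \<and>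
     (CARD('n) = 2 \<longrightarrow> (\<forall>h\<in>H. h \<in> S \<and> g h = h \<longrightarrow>
        (\<exists>q. (\<forall>j. q$j - h$j \<in> {-1,0,1}) \<and> q \<noteq> h \<and> (q \<notin> S \<or> g q \<noteq> h)))))"

lemma Inv_empty: "Inv M H {}" unfolding Inv_def by auto

lemma Inv_step:
  fixes c :: "real^'n"
  assumes inv: "Inv M H S" and r1: "1 \<le> \<rho>" and rM: "\<rho> \<le> M" and hit: "H \<inter> cball c \<rho> \<noteq> {}"
  shows "Inv M H (anc_step S (cball c \<rho>, c))"
proof (cases "S \<inter> cball c \<rho> \<noteq> {}")
  case True
  then show ?thesis using inv unfolding anc_step_def by simp
next
  case False
  then have disj: "S \<inter> cball c \<rho> = {}" by simp
  define p where "p = anc_point c (\<rho> / sqrt (real CARD('n)))"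
  have step: "anc_step S (cball c \<rho>, c) = insert p S"
    unfolding anc_step_def p_def using disj r1 by (simp add: width_cball)
  obtain h0 where h0: "h0 \<in> H" "h0 \<in> cball c \<rho>" using hit by blast
  have h0S: "h0 \<notin> S" using disj h0(2) by blast
  have pr: "p \<in> reach M h0" unfolding reach_def p_def using r1 rM h0(2) by (auto simp: mem_cball)
  from inv obtain g where finS: "finite S" and g1: "\<forall>p\<in>S. g p \<in> H \<and> p \<in> reach M (g p)"
    and g2: "CARD('n) = 2 \<longrightarrow> (\<forall>h\<in>H. h \<in> S \<and> g h = h \<longrightarrow>
        (\<exists>q. (\<forall>j. q$j - h$j \<in> {-1,0,1}) \<and> q \<noteq> h \<and> (q \<notin> S \<or> g q \<noteq> h)))"
    unfolding Inv_def by blast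
  show ?thesis
  proof (cases "p \<in> S")
    case True
    then show ?thesis using inv step by (simp add: insert_absorb)
  next
    case pS: False
    define g' where "g' = g(p := h0)"
    have A: "\<forall>x\<in>insert p S. g' x \<in> H \<and> x \<in> reach M (g' x)"
      using g1 h0(1) pr pS unfolding g'_def by auto
    have B: "CARD('n) = 2 \<longrightarrow> (\<forall>h\<in>H. h \<in> insert p S \<and> g' h = h \<longrightarrow>
        (\<exists>q. (\<forall>j. q$j - h$j \<in> {-1,0,1}) \<and> q \<noteq> h \<and> (q \<notin> insert p S \<or> g' q \<noteq> h)))"
    proof (intro impI ballI)
      fix h assume d2: "CARD('n) = 2" and hH: "h \<in> H" and hh: "h \<in> insert p S \<and> g' h = h"
      show "\<exists>q. (\<forall>j. q$j - h$j \<in> {-1,0,1}) \<and> q \<noteq> h \<and> (q \<notin> insert p S \<or> g' q \<noteq> h)"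
      proof (cases "h = p")
        case True
        then have "h0 = h" using hh unfolding g'_def by simp
        then have "dist c h \<le> \<rho>" using h0(2) by (simp add: mem_cball)
        then obtain q where q: "\<forall>j. q$j - h$j \<in> {-1,0,1}" "q \<noteq> h" "dist c q \<le> \<rho>"
          using cover2[OF d2 _ r1] by blast
        have "q \<notin> S" using disj q(3) by (auto simp: mem_cball)
        then have "q \<notin> insert p S" using q(2) True by simp
        then show ?thesis using q by blast
      next
        case False
        then have hS: "h \<in> S" and gh: "g h = h" using hh unfolding g'_def by auto
        then obtain q where q: "\<forall>j. q$j - h$j \<in> {-1,0,1}" "q \<noteq> h" "q \<notin> S \<or> g q \<noteq> h"
          using g2 d2 hH by blast
        show ?thesis
        proof (cases "q = p")
          case True
          have "g' q = h0" using True unfolding g'_def by simp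
          moreover have "h0 \<noteq> h" using h0S hS by auto
          ultimately show ?thesis using q by blast
        next
          case False
          then show ?thesis using q unfolding g'_def by auto
        qed
      qed
    qed
    show ?thesis unfolding step Inv_def using finS A B by blast
  qed
qed

lemma Inv_run:
  assumes "\<forall>(c, \<rho>) \<in> set balls. 1 \<le> \<rho> \<and> \<rho> \<le> M"
    and "\<forall>(c, \<rho>) \<in> set balls. H \<inter> cball c \<rho> \<noteq> {}"
  shows "Inv M H (anc_run (map (\<lambda>(c, \<rho>). (cball c \<rho>, c::real^'n)) balls))"
  using assms
proof (induction balls rule: rev_induct)
  case Nil
  then show ?case unfolding anc_run_def by (simp add: Inv_empty)
next
  case (snoc x xs)
  obtain c \<rho> where x: "x = (c, \<rho>)" by (cases x)
  have IH: "Inv M H (foldl anc_step {} (map (\<lambda>(c, \<rho>). (cball c \<rho>, c)) xs))"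
    using snoc unfolding anc_run_def by auto
  have "1 \<le> \<rho>" "\<rho> \<le> M" "H \<inter> cball c \<rho> \<noteq> {}" using snoc.prems x by auto
  then show ?case unfolding anc_run_def using Inv_step[OF IH] x by simp
qed

theorem corollary1:
  fixes M :: real
    and balls :: "((real^'n) \<times> real) list"
    and H :: "(real^'n) set"
  assumes "M > 1"
    and "\<forall>(c, \<rho>) \<in> set balls. 1 \<le> \<rho> \<and> \<rho> \<le> M"
    and "finite H" and "H \<subseteq> int_lattice"
    and "\<forall>(c, \<rho>) \<in> set balls. H \<inter> cball c \<rho> \<noteq> {}"
  shows "real (card (anc_run (map (\<lambda>(c, \<rho>). (cball c \<rho>, c)) balls)))
           \<le> of_int (\<lfloor>2 * sqrt (real CARD('n)) + 2\<rfloor> ^ CARD('n))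
             * of_int (\<lfloor>log 2 M\<rfloor> + 1) * real (card H)"
proof -
  define S where "S = anc_run (map (\<lambda>(c, \<rho>). (cball c \<rho>, c::real^'n)) balls)"
  define B where "B = (real_of_int \<lfloor>2 * sqrt (real CARD('n)) + 2\<rfloor>) ^ CARD('n) * (real_of_int \<lfloor>log 2 M\<rfloor> + 1)"
  have inv: "Inv M H S" unfolding S_def by (rule Inv_run[OF assms(2) assms(5)])
  then obtain g where finS: "finite S" and g1: "\<forall>p\<in>S. g p \<in> H \<and> p \<in> reach M (g p)"
    and g2: "CARD('n) = 2 \<longrightarrow> (\<forall>h\<in>H. h \<in> S \<and> g h = h \<longrightarrow>
        (\<exists>q. (\<forall>j. q$j - h$j \<in> {-1,0,1}) \<and> q \<noteq> h \<and> (q \<notin> S \<or> g q \<noteq> h)))"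
    unfolding Inv_def by blast
  have Fh: "real (card {p\<in>S. g p = h}) \<le> B" if hH: "h \<in> H" for h
    unfolding B_def
  proof (rule reach_bound[OF assms(1)])
    show "h \<in> int_lattice" using hH assms(4) by blast
    show "finite {p\<in>S. g p = h}" using finS by simp
    show "{p\<in>S. g p = h} \<subseteq> reach M h" using g1 by auto
    show "\<exists>q. (\<forall>j. q$j - h$j \<in> {-1,0,1}) \<and> q \<noteq> h \<and> q \<notin> {p\<in>S. g p = h}"
      if d2: "CARD('n) = 2" and hF: "h \<in> {p\<in>S. g p = h}"
    proof -
      have "h \<in> S" "g h = h" using hF by auto
      then obtain q where "\<forall>j. q$j - h$j \<in> {-1,0,1}" "q \<noteq> h" "q \<notin> S \<or> g q \<noteq> h"
        using g2 d2 hH by blast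
      then show ?thesis by blast
    qed
  qed
  have sub: "S \<subseteq> (\<Union>h\<in>H. {p\<in>S. g p = h})" using g1 by auto
  have "card S \<le> card (\<Union>h\<in>H. {p\<in>S. g p = h})"
    by (rule card_mono[OF _ sub]) (use assms(3) finS in auto)
  also have "\<dots> \<le> (\<Sum>h\<in>H. card {p\<in>S. g p = h})" by (rule card_UN_le[OF assms(3)])
  finally have "real (card S) \<le> real (\<Sum>h\<in>H. card {p\<in>S. g p = h})"
    by (rule of_nat_mono)
  also have "\<dots> = (\<Sum>h\<in>H. real (card {p\<in>S. g p = h}))" by (rule of_nat_sum)
  also have "\<dots> \<le> (\<Sum>h\<in>H. B)" by (rule sum_mono) (rule Fh)
  also have "\<dots> = B * real (card H)" by simp
  finally have "real (card S) \<le> B * real (card H)" .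
  then show ?thesis unfolding S_def B_def by (simp add: of_int_power)
qed

end
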